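(* Let $(\alpha_j)_{j\ge0}$ be a deterministic sequence in the open unit disc with only finitely many nonzero terms, and set $\alpha_{-1}:=-1$. Let $\rho_j=(1-|\alpha_j|^2)^{1/2}$, $\Theta_j=\begin{pmatrix}\alpha_j&\rho_j\\ \rho_j&-\overline{\alpha_j}\end{pmatrix}$, $\mathcal{L}=\mathrm{Diag}(\Theta_0,\Theta_2,\dots)$, $\mathcal{M}=\mathrm{Diag}(1,\Theta_1,\Theta_3,\dots)$ and $\mathcal{C}=\mathcal{L}\mathcal{M}$ (infinite matrices indexed by positive integers). Then for every $k\ge2$, $$\mathrm{tr}(\mathcal{C}^k) = -k\sum_{j\ge-1}\overline{\alpha_j}\,\rho_{j+1}^2\rho_{j+2}^2\cdots\rho_{j+k-1}^2\,\alpha_{j+k} + O\Big(k^3\sum_{j\ge-1}|\alpha_j|^3\Big),$$ where the implicit constant in $O$ is absolute.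
   Context: With finitely many nonzero $\alpha_j$, $\mathcal{C}^k$ has only finitely many nonzero diagonal entries, so the trace is a finite sum. *)

theory Defs
  imports "HOL-Analysis.Analysis"
begin

text \<open>Infinite matrices are functions nat \<Rightarrow> nat \<Rightarrow> complex indexed by positive
  integers; row/column 0 is unused and identically zero.\<close>

definition rho :: "complex \<Rightarrow> real" where
  "rho a = sqrt (1 - (cmod a)^2)"

definition theta :: "complex \<Rightarrow> nat \<Rightarrow> nat \<Rightarrow> complex" where
  "theta a r s =
     (if r = 0 \<and> s = 0 then a
      else if r = 1 \<and> s = 1 then - cnj a
      else complex_of_real (rho a))"

text \<open>L = Diag(Theta_0, Theta_2, ...): block b occupies rows/cols 2b+1, 2b+2.\<close>
definition cmvL :: "(nat \<Rightarrow> complex) \<Rightarrow> nat \<Rightarrow> nat \<Rightarrow> complex" where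
  "cmvL \<alpha> i j =
     (if 1 \<le> i \<and> 1 \<le> j \<and> (i - 1) div 2 = (j - 1) div 2
      then theta (\<alpha> (2 * ((i - 1) div 2))) ((i - 1) mod 2) ((j - 1) mod 2)
      else 0)"

text \<open>M = Diag(1, Theta_1, Theta_3, ...): block m \<ge> 1 occupies rows/cols 2m, 2m+1.\<close>
definition cmvM :: "(nat \<Rightarrow> complex) \<Rightarrow> nat \<Rightarrow> nat \<Rightarrow> complex" where
  "cmvM \<alpha> i j =
     (if i = 1 \<and> j = 1 then 1
      else if 2 \<le> i \<and> 2 \<le> j \<and> i div 2 = j div 2
      then theta (\<alpha> (2 * (i div 2) - 1)) (i mod 2) (j mod 2)
      else 0)"

definition mat_mult :: "(nat \<Rightarrow> nat \<Rightarrow> complex) \<Rightarrow> (nat \<Rightarrow> nat \<Rightarrow> complex) \<Rightarrow> nat \<Rightarrow> nat \<Rightarrow> complex" where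
  "mat_mult A B i j = (\<Sum>\<^sub>\<infinity> l. A i l * B l j)"

definition mat_id :: "nat \<Rightarrow> nat \<Rightarrow> complex" where
  "mat_id i j = (if i = j \<and> 1 \<le> i then 1 else 0)"

fun mat_pow :: "(nat \<Rightarrow> nat \<Rightarrow> complex) \<Rightarrow> nat \<Rightarrow> nat \<Rightarrow> nat \<Rightarrow> complex" where
  "mat_pow A 0 = mat_id"
| "mat_pow A (Suc n) = mat_mult A (mat_pow A n)"

definition mat_trace :: "(nat \<Rightarrow> nat \<Rightarrow> complex) \<Rightarrow> complex" where
  "mat_trace A = (\<Sum>\<^sub>\<infinity> i\<in>{1..}. A i i)"

definition cmv :: "(nat \<Rightarrow> complex) \<Rightarrow> nat \<Rightarrow> nat \<Rightarrow> complex" where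
  "cmv \<alpha> = mat_mult (cmvL \<alpha>) (cmvM \<alpha>)"

definition alpha_ext :: "(nat \<Rightarrow> complex) \<Rightarrow> int \<Rightarrow> complex" where
  "alpha_ext \<alpha> j = (if j = -1 then -1 else if j \<ge> 0 then \<alpha> (nat j) else 0)"

end

theory Submission
  imports Defs
begin

definition lmul :: "(nat\<Rightarrow>nat\<Rightarrow>complex) \<Rightarrow> (nat\<Rightarrow>nat\<Rightarrow>complex) \<Rightarrow> nat\<Rightarrow>nat\<Rightarrow>complex" where
  "lmul F P x y = (\<Sum>l\<in>{x-1..x+1}. F x l * P l y)"

definition Gm :: "(nat\<Rightarrow>complex) \<Rightarrow> nat \<Rightarrow> nat\<Rightarrow>nat\<Rightarrow>complex" where
  "Gm \<alpha> s = (if even s then cmvL \<alpha> else cmvM \<alpha>)"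

fun Em :: "(nat\<Rightarrow>complex) \<Rightarrow> nat \<Rightarrow> nat\<Rightarrow>nat\<Rightarrow>complex" where
  "Em \<alpha> 0 = mat_id"
| "Em \<alpha> (Suc s) = lmul (Gm \<alpha> (Suc s)) (Em \<alpha> s)"

lemma cmvL_band: "cmvL \<alpha> x l \<noteq> 0 \<Longrightarrow> l \<in> {x-1..x+1} \<and> 1 \<le> x"
  unfolding cmvL_def by (auto split: if_splits)

lemma cmvM_band: "cmvM \<alpha> x l \<noteq> 0 \<Longrightarrow> l \<in> {x-1..x+1} \<and> 1 \<le> x"
  unfolding cmvM_def by (auto split: if_splits)

lemma Gm_band: "Gm \<alpha> s x l \<noteq> 0 \<Longrightarrow> l \<in> {x-1..x+1} \<and> 1 \<le> x"
  unfolding Gm_def using cmvL_band cmvM_band by (auto split: if_splits)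

lemma infsum_supp:
  assumes "finite S" "\<And>l. l \<notin> S \<Longrightarrow> f l = 0"
  shows "(\<Sum>\<^sub>\<infinity> l. f l) = (\<Sum>l\<in>S. f l)"
proof -
  have "(\<Sum>\<^sub>\<infinity> l. f l) = (\<Sum>\<^sub>\<infinity> l\<in>S. f l)"
    by (rule infsum_cong_neutral) (use assms in auto)
  thus ?thesis using assms by simp
qed

lemma mat_mult_band:
  assumes "\<And>l. F x l \<noteq> 0 \<Longrightarrow> l \<in> {x-1..x+1}"
  shows "mat_mult F P x y = lmul F P x y"
  unfolding mat_mult_def lmul_def
  by (rule infsum_supp) (use assms in auto)

lemma cmv_entry: "cmv \<alpha> x l = (\<Sum>m\<in>{x-1..x+1}. cmvL \<alpha> x m * cmvM \<alpha> m l)"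
  unfolding cmv_def by (rule mat_mult_band[unfolded lmul_def]) (use cmvL_band in blast)

lemma cmv_band: "cmv \<alpha> x l \<noteq> 0 \<Longrightarrow> l \<in> {x-2..x+2}"
proof -
  assume "cmv \<alpha> x l \<noteq> 0"
  then obtain m where "m \<in> {x-1..x+1}" "cmvM \<alpha> m l \<noteq> 0"
    unfolding cmv_entry by (metis (no_types, lifting) mult_zero_right sum.neutral)
  then show ?thesis using cmvM_band[of \<alpha> m l] by auto
qed

lemma mat_mult_cmv: "mat_mult (cmv \<alpha>) P x y = lmul (cmvL \<alpha>) (lmul (cmvM \<alpha>) P) x y"
proof -
  have "mat_mult (cmv \<alpha>) P x y = (\<Sum>l\<in>{x-2..x+2}. cmv \<alpha> x l * P l y)"
    unfolding mat_mult_def by (rule infsum_supp) (use cmv_band in auto)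
  also have "\<dots> = (\<Sum>l\<in>{x-2..x+2}. \<Sum>m\<in>{x-1..x+1}. cmvL \<alpha> x m * cmvM \<alpha> m l * P l y)"
    by (simp only: cmv_entry sum_distrib_right)
  also have "\<dots> = (\<Sum>m\<in>{x-1..x+1}. \<Sum>l\<in>{x-2..x+2}. cmvL \<alpha> x m * cmvM \<alpha> m l * P l y)"
    by (rule sum.swap)
  also have "\<dots> = (\<Sum>m\<in>{x-1..x+1}. \<Sum>l\<in>{m-1..m+1}. cmvL \<alpha> x m * cmvM \<alpha> m l * P l y)"
  proof (rule sum.cong[OF refl])
    fix m assume m: "m \<in> {x-1..x+1}"
    show "(\<Sum>l\<in>{x-2..x+2}. cmvL \<alpha> x m * cmvM \<alpha> m l * P l y) = (\<Sum>l\<in>{m-1..m+1}. cmvL \<alpha> x m * cmvM \<alpha> m l * P l y)"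
      by (rule sum.mono_neutral_right) (use m cmvM_band[of \<alpha> m] in force)+
  qed
  finally show ?thesis unfolding lmul_def by (simp only: sum_distrib_left mult.assoc)
qed

lemma mat_pow_Em: "mat_pow (cmv \<alpha>) n = Em \<alpha> (2*n)"
proof (induction n)
  case 0 then show ?case by simp
next
  case (Suc n)
  have "mat_pow (cmv \<alpha>) (Suc n) = mat_mult (cmv \<alpha>) (Em \<alpha> (2*n))" using Suc by simp
  also have "\<dots> = Em \<alpha> (2 * Suc n)"
    by (rule ext, rule ext) (simp add: mat_mult_cmv Gm_def)
  finally show ?case .
qed

definition fF :: "nat \<Rightarrow> nat \<Rightarrow> nat" where
  "fF s x = (if x = 0 then 0 else if x = 1 \<and> odd s then 1 else if odd (x+s) then x+1 else x-1)"

definition bw :: "(nat\<Rightarrow>complex) \<Rightarrow> nat \<Rightarrow> nat \<Rightarrow> complex" where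
  "bw \<alpha> s x = (if odd (x+s) then \<alpha> (x-1) else \<alpha> (x-2))"

lemma cmvL_odd: "cmvL \<alpha> (2*b+1) l = (if l = 2*b+1 then \<alpha> (2*b) else if l = 2*b+2 then of_real (rho (\<alpha> (2*b))) else 0)"
proof -
  have "(1 \<le> l \<and> b = (l - 1) div 2) \<longleftrightarrow> (l = 2*b+1 \<or> l = 2*b+2)" by presburger
  moreover have "l = 2*b+2 \<Longrightarrow> (l-1) mod 2 = 1" by presburger
  ultimately show ?thesis unfolding cmvL_def theta_def by auto
qed

lemma cmvL_even: "cmvL \<alpha> (2*b+2) l = (if l = 2*b+2 then - cnj (\<alpha> (2*b)) else if l = 2*b+1 then of_real (rho (\<alpha> (2*b))) else 0)"
proof -
  have "(1 \<le> l \<and> b = (l - 1) div 2) \<longleftrightarrow> (l = 2*b+1 \<or> l = 2*b+2)" by presburger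
  moreover have "(2*b+2-1) div 2 = b" "(2*b+2-1) mod 2 = 1" by presburger+
  moreover have "l = 2*b+2 \<Longrightarrow> (l-1) mod 2 = 1" by presburger
  ultimately show ?thesis unfolding cmvL_def theta_def by auto
qed

lemma cmvM_one: "cmvM \<alpha> 1 l = (if l = 1 then 1 else 0)"
  unfolding cmvM_def by auto

lemma cmvM_even: "1 \<le> m \<Longrightarrow> cmvM \<alpha> (2*m) l = (if l = 2*m then \<alpha> (2*m-1) else if l = 2*m+1 then of_real (rho (\<alpha> (2*m-1))) else 0)"
proof -
  assume m: "1 \<le> m"
  have "(2 \<le> l \<and> m = l div 2) \<longleftrightarrow> (l = 2*m \<or> l = 2*m+1)" using m by presburger
  moreover have "l = 2*m+1 \<Longrightarrow> l mod 2 = 1" by presburger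
  ultimately show ?thesis using m unfolding cmvM_def theta_def by auto
qed

lemma cmvM_odd: "1 \<le> m \<Longrightarrow> cmvM \<alpha> (2*m+1) l = (if l = 2*m+1 then - cnj (\<alpha> (2*m-1)) else if l = 2*m then of_real (rho (\<alpha> (2*m-1))) else 0)"
proof -
  assume m: "1 \<le> m"
  have "(2 \<le> l \<and> m = l div 2) \<longleftrightarrow> (l = 2*m \<or> l = 2*m+1)" using m by presburger
  moreover have "l = 2*m+1 \<Longrightarrow> l mod 2 = 1" by presburger
  moreover have "(2*m+1) div 2 = m" "(2*m+1) mod 2 = 1" by presburger+
  ultimately show ?thesis using m unfolding cmvM_def theta_def by auto
qed

lemma Gm_entry:
  assumes "1 \<le> x" "\<not> (x = 1 \<and> odd s)"
  shows "Gm \<alpha> s x l = (if l = x then (if odd (x+s) then bw \<alpha> s x else - cnj (bw \<alpha> s x))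
           else if l = fF s x then of_real (rho (bw \<alpha> s x)) else 0)"
proof (cases "even s")
  case True
  show ?thesis
  proof (cases "odd x")
    case True
    then obtain b where b: "x = 2*b+1" using oddE by blast
    have g: "Gm \<alpha> s = cmvL \<alpha>" using \<open>even s\<close> by (simp add: Gm_def)
    show ?thesis using \<open>even s\<close> unfolding g b cmvL_odd by (auto simp: fF_def bw_def)
  next
    case False
    have "x = 2*((x-2) div 2)+2" using False assms(1) by presburger
    then obtain b where b: "x = 2*b+2" by blast
    have g: "Gm \<alpha> s = cmvL \<alpha>" using \<open>even s\<close> by (simp add: Gm_def)
    show ?thesis using \<open>even s\<close> unfolding g b cmvL_even by (auto simp: fF_def bw_def)
  qed
next
  case False
  show ?thesis
  proof (cases "even x")
    case True
    have "x = 2*(x div 2) \<and> 1 \<le> x div 2" using True assms(1) by presburger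
    then obtain m where b: "x = 2*m" "1 \<le> m" by blast
    have g: "Gm \<alpha> s = cmvM \<alpha>" using \<open>\<not> even s\<close> by (simp add: Gm_def)
    show ?thesis using \<open>\<not> even s\<close> b(2) unfolding g b cmvM_even[OF b(2)] by (auto simp: fF_def bw_def)
  next
    case False
    have "x = 2*(x div 2)+1 \<and> 1 \<le> x div 2" using False assms \<open>\<not> even s\<close> by presburger
    then obtain m where b: "x = 2*m+1" "1 \<le> m" by blast
    have g: "Gm \<alpha> s = cmvM \<alpha>" using \<open>\<not> even s\<close> by (simp add: Gm_def)
    show ?thesis using \<open>\<not> even s\<close> b(2) unfolding g b cmvM_odd[OF b(2)] by (auto simp: fF_def bw_def)
  qed
qed

lemma Gm_one: "odd s \<Longrightarrow> Gm \<alpha> s 1 l = (if l = 1 then 1 else 0)"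
  unfolding Gm_def using cmvM_one by auto

lemma Gm_zero: "Gm \<alpha> s 0 l = 0"
  by (meson Gm_band not_one_le_zero)

lemma Am_entry: "Gm (\<lambda>_. 0) s x l = (if 1 \<le> x \<and> l = fF s x then 1 else 0)"
proof -
  consider "x = 0" | "x = 1 \<and> odd s" | "1 \<le> x \<and> \<not> (x = 1 \<and> odd s)" by linarith
  then show ?thesis
  proof cases
    case 1 then show ?thesis using Gm_zero by simp
  next
    case 2 then show ?thesis using Gm_one[of s "\<lambda>_. 0"] by (auto simp: fF_def)
  next
    case 3
    have "fF s x \<noteq> x" using 3 unfolding fF_def by auto
    then show ?thesis using 3 Gm_entry[of x s "\<lambda>_. 0" l] by (auto simp: bw_def rho_def)
  qed
qed

definition vmul :: "(nat\<Rightarrow>nat\<Rightarrow>complex) \<Rightarrow> (nat\<Rightarrow>complex) \<Rightarrow> nat \<Rightarrow> complex" where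
  "vmul F v x = (\<Sum>l\<in>{x-1..x+1}. F x l * v l)"

lemma lmul_vmul: "lmul F P x y = vmul F (\<lambda>l. P l y) x"
  unfolding lmul_def vmul_def ..

lemma unit_block:
  "(\<rho>::real)^2 + (cmod a)^2 = 1 \<Longrightarrow> (cmod (a*u + \<rho>*w))^2 + (cmod (\<rho>*u - cnj a * w))^2 = (cmod u)^2 + (cmod w)^2"
  unfolding cmod_power2 by (simp add: algebra_simps power2_eq_square) algebra

lemma fF_nb: "1 \<le> x \<Longrightarrow> \<not> (x = 1 \<and> odd s) \<Longrightarrow> fF s x \<noteq> x \<and> fF s x \<in> {x-1..x+1} \<and> 1 \<le> fF s x"
  unfolding fF_def by auto

lemma sum_two:
  assumes "1 \<le> x" "\<not> (x = 1 \<and> odd s)" "\<And>l. l \<noteq> x \<Longrightarrow> l \<noteq> fF s x \<Longrightarrow> h l = 0"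
  shows "(\<Sum>l\<in>{x-1..x+1}. h l) = h x + h (fF s x)"
proof -
  have "(\<Sum>l\<in>{x-1..x+1}. h l) = (\<Sum>l\<in>{x, fF s x}. h l)"
    by (rule sum.mono_neutral_right) (use assms fF_nb[OF assms(1,2)] in auto)
  also have "\<dots> = h x + h (fF s x)" using fF_nb[OF assms(1,2)] by simp
  finally show ?thesis .
qed

lemma vmul_G:
  assumes "1 \<le> x" "\<not> (x = 1 \<and> odd s)"
  shows "vmul (Gm \<alpha> s) v x = (if odd (x+s) then bw \<alpha> s x else - cnj (bw \<alpha> s x)) * v x
                 + of_real (rho (bw \<alpha> s x)) * v (fF s x)"
  unfolding vmul_def
  by (subst sum_two[OF assms]) (use Gm_entry[OF assms] fF_nb[OF assms] in auto)

lemma vmul_G0: "vmul (Gm \<alpha> s) v 0 = 0"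
  unfolding vmul_def by (simp add: Gm_zero)

lemma vmul_G1: "odd s \<Longrightarrow> vmul (Gm \<alpha> s) v 1 = v 1"
proof -
  assume "odd s"
  then have g: "\<And>l. Gm \<alpha> s (Suc 0) l = (if l = Suc 0 then 1 else 0)" using Gm_one by simp
  show ?thesis unfolding vmul_def by (simp add: g)
qed

lemma rho_sq: "cmod a \<le> 1 \<Longrightarrow> (rho a)^2 + (cmod a)^2 = 1"
  unfolding rho_def by (simp add: abs_square_le_1)

lemma block_sum_odd: fixes f :: "nat \<Rightarrow> 'a::comm_monoid_add" shows "(\<Sum>x<2*n+1. f x) = f 0 + (\<Sum>b<n. f (2*b+1) + f (2*b+2))"
  by (induction n) (simp_all add: algebra_simps)

lemma block_sum_even: fixes f :: "nat \<Rightarrow> 'a::comm_monoid_add" shows "(\<Sum>x<2*n+2. f x) = f 0 + f 1 + (\<Sum>b<n. f (2*b+2) + f (Suc (2*b+2)))"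
  by (induction n) (simp_all add: algebra_simps)

lemma unit_L:
  assumes "\<forall>j. cmod (\<alpha> j) < 1" "even s"
  shows "(\<Sum>x<2*n+1. (cmod (vmul (Gm \<alpha> s) v x))^2) \<le> (\<Sum>x<2*n+1. (cmod (v x))^2)"
proof -
  have "(\<Sum>x<2*n+1. (cmod (vmul (Gm \<alpha> s) v x))^2) = (\<Sum>b<n. (cmod (v (2*b+1)))^2 + (cmod (v (2*b+2)))^2)"
  proof -
    have eq: "(cmod (vmul (Gm \<alpha> s) v (2*b+1)))^2 + (cmod (vmul (Gm \<alpha> s) v (2*b+2)))^2
        = (cmod (v (2*b+1)))^2 + (cmod (v (2*b+2)))^2" for b
    proof -
      have o: "odd (2*b+1+s)" "\<not> odd (2*b+2+s)" using assms(2) by auto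
      have f: "fF s (2*b+1) = 2*b+2" "fF s (2*b+2) = 2*b+1" using assms(2) unfolding fF_def by auto
      have w: "bw \<alpha> s (2*b+1) = \<alpha> (2*b)" "bw \<alpha> s (2*b+2) = \<alpha> (2*b)" using o unfolding bw_def by auto
      have r: "(rho (\<alpha> (2*b)))^2 + (cmod (\<alpha> (2*b)))^2 = 1" using assms(1) by (simp add: less_imp_le rho_sq)
      have v1: "vmul (Gm \<alpha> s) v (2*b+1) = \<alpha> (2*b) * v (2*b+1) + of_real (rho (\<alpha> (2*b))) * v (2*b+2)"
        using vmul_G[of "2*b+1" s \<alpha> v] o f w assms(2) by simp
      have v2: "vmul (Gm \<alpha> s) v (2*b+2) = of_real (rho (\<alpha> (2*b))) * v (2*b+1) - cnj (\<alpha> (2*b)) * v (2*b+2)"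
        using vmul_G[of "2*b+2" s \<alpha> v] o f w assms(2) by simp
      show ?thesis unfolding v1 v2 by (rule unit_block[OF r])
    qed
    show ?thesis unfolding block_sum_odd using eq[simplified] by (simp add: vmul_G0)
  qed
  also have "\<dots> \<le> (\<Sum>x<2*n+1. (cmod (v x))^2)" unfolding block_sum_odd by simp
  finally show ?thesis .
qed

lemma unit_M:
  assumes "\<forall>j. cmod (\<alpha> j) < 1" "odd s"
  shows "(\<Sum>x<2*n+2. (cmod (vmul (Gm \<alpha> s) v x))^2) \<le> (\<Sum>x<2*n+2. (cmod (v x))^2)"
proof -
  have eq: "(cmod (vmul (Gm \<alpha> s) v (2*b+2)))^2 + (cmod (vmul (Gm \<alpha> s) v (Suc (2*b+2))))^2
        = (cmod (v (2*b+2)))^2 + (cmod (v (Suc (2*b+2))))^2" for b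
  proof -
    have o: "odd (2*b+2+s)" "\<not> odd (Suc (2*b+2)+s)" using assms(2) by auto
    have f: "fF s (2*b+2) = Suc (2*b+2)" "fF s (Suc (2*b+2)) = 2*b+2" using assms(2) unfolding fF_def by auto
    have w: "bw \<alpha> s (2*b+2) = \<alpha> (2*b+1)" "bw \<alpha> s (Suc (2*b+2)) = \<alpha> (2*b+1)" using o unfolding bw_def by auto
    have r: "(rho (\<alpha> (2*b+1)))^2 + (cmod (\<alpha> (2*b+1)))^2 = 1" using assms(1) by (simp add: less_imp_le rho_sq)
    have v1: "vmul (Gm \<alpha> s) v (2*b+2) = \<alpha> (2*b+1) * v (2*b+2) + of_real (rho (\<alpha> (2*b+1))) * v (Suc (2*b+2))"
      using vmul_G[of "2*b+2" s \<alpha> v] o f w by simp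
    have v2: "vmul (Gm \<alpha> s) v (Suc (2*b+2)) = of_real (rho (\<alpha> (2*b+1))) * v (2*b+2) - cnj (\<alpha> (2*b+1)) * v (Suc (2*b+2))"
      using vmul_G[of "Suc (2*b+2)" s \<alpha> v] o f w by simp
    show ?thesis unfolding v1 v2 by (rule unit_block[OF r])
  qed
  show ?thesis unfolding block_sum_even using eq[simplified] vmul_G1[OF assms(2)] by (simp add: vmul_G0)
qed

lemma sum_lt_mono: "A \<le> B \<Longrightarrow> (\<forall>x. 0 \<le> f x) \<Longrightarrow> (\<Sum>x<A. f x) \<le> (\<Sum>x<(B::nat). (f x::real))"
  by (rule sum_mono2) auto

lemma unit_G:
  assumes "\<forall>j. cmod (\<alpha> j) < 1"
  shows "(\<Sum>x<Y. (cmod (vmul (Gm \<alpha> s) v x))^2) \<le> (\<Sum>x<Y+1. (cmod (v x))^2)"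
proof (cases "even s")
  case True
  define n where "n = Y div 2"
  have "(\<Sum>x<Y. (cmod (vmul (Gm \<alpha> s) v x))^2) \<le> (\<Sum>x<2*n+1. (cmod (vmul (Gm \<alpha> s) v x))^2)"
    by (rule sum_lt_mono) (auto simp: n_def)
  also have "\<dots> \<le> (\<Sum>x<2*n+1. (cmod (v x))^2)" by (rule unit_L[OF assms True])
  also have "\<dots> \<le> (\<Sum>x<Y+1. (cmod (v x))^2)" by (rule sum_lt_mono) (auto simp: n_def)
  finally show ?thesis .
next
  case False
  show ?thesis
  proof (cases "Y = 0")
    case True then show ?thesis by simp
  next
    case Y: False
    define n where "n = (Y - 1) div 2"
    have "(\<Sum>x<Y. (cmod (vmul (Gm \<alpha> s) v x))^2) \<le> (\<Sum>x<2*n+2. (cmod (vmul (Gm \<alpha> s) v x))^2)"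
      by (rule sum_lt_mono) (auto simp: n_def)
    also have "\<dots> \<le> (\<Sum>x<2*n+2. (cmod (v x))^2)" using unit_M[OF assms] False by blast
    also have "\<dots> \<le> (\<Sum>x<Y+1. (cmod (v x))^2)" by (rule sum_lt_mono) (use Y in \<open>auto simp: n_def\<close>)
    finally show ?thesis .
  qed
qed

lemma Em_col: "\<forall>j. cmod (\<alpha> j) < 1 \<Longrightarrow> (\<Sum>x<Y. (cmod (Em \<alpha> s x y))^2) \<le> 1"
proof (induction s arbitrary: Y)
  case 0
  have e: "(\<lambda>x. (cmod (mat_id x y))^2) = (\<lambda>x. if x = y then (cmod (mat_id y y))^2 else 0)"
    by (auto simp: mat_id_def)
  show ?case unfolding Em.simps(1) e sum.delta[OF finite_lessThan] by (auto simp: mat_id_def)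
next
  case (Suc s)
  have "(\<Sum>x<Y. (cmod (Em \<alpha> (Suc s) x y))^2) = (\<Sum>x<Y. (cmod (vmul (Gm \<alpha> (Suc s)) (\<lambda>l. Em \<alpha> s l y) x))^2)"
    by (simp add: lmul_vmul)
  also have "\<dots> \<le> (\<Sum>x<Y+1. (cmod (Em \<alpha> s x y))^2)" by (rule unit_G[OF Suc.prems])
  also have "\<dots> \<le> 1" using Suc by blast
  finally show ?case .
qed

lemma Em_bound: assumes "\<forall>j. cmod (\<alpha> j) < 1" shows "cmod (Em \<alpha> s x y) \<le> 1"
proof -
  have "(cmod (Em \<alpha> s x y))^2 \<le> (\<Sum>x'<x+1. (cmod (Em \<alpha> s x' y))^2)"
    by (rule member_le_sum) auto
  also have "\<dots> \<le> 1" by (rule Em_col[OF assms])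
  finally show ?thesis by (simp add: power_le_one_iff)
qed

definition Dm :: "(nat\<Rightarrow>complex) \<Rightarrow> nat \<Rightarrow> nat\<Rightarrow>nat\<Rightarrow>complex" where
  "Dm \<alpha> s x l = Gm \<alpha> s x l - Gm (\<lambda>_. 0) s x l"

abbreviation Am :: "nat \<Rightarrow> nat\<Rightarrow>nat\<Rightarrow>complex" where "Am s \<equiv> Gm (\<lambda>_. 0) s"

fun Q0 :: "nat \<Rightarrow> nat\<Rightarrow>nat\<Rightarrow>complex" where
  "Q0 0 = mat_id"
| "Q0 (Suc s) = lmul (Am (Suc s)) (Q0 s)"

fun Q1 :: "(nat\<Rightarrow>complex) \<Rightarrow> nat \<Rightarrow> nat\<Rightarrow>nat\<Rightarrow>complex" where
  "Q1 \<alpha> 0 = (\<lambda>_ _. 0)"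
| "Q1 \<alpha> (Suc s) = (\<lambda>x y. lmul (Am (Suc s)) (Q1 \<alpha> s) x y + lmul (Dm \<alpha> (Suc s)) (Q0 s) x y)"

fun Q2 :: "(nat\<Rightarrow>complex) \<Rightarrow> nat \<Rightarrow> nat\<Rightarrow>nat\<Rightarrow>complex" where
  "Q2 \<alpha> 0 = (\<lambda>_ _. 0)"
| "Q2 \<alpha> (Suc s) = (\<lambda>x y. lmul (Am (Suc s)) (Q2 \<alpha> s) x y + lmul (Dm \<alpha> (Suc s)) (Q1 \<alpha> s) x y)"

fun Rr :: "(nat\<Rightarrow>complex) \<Rightarrow> nat \<Rightarrow> nat\<Rightarrow>nat\<Rightarrow>complex" where
  "Rr \<alpha> 0 = (\<lambda>_ _. 0)"
| "Rr \<alpha> (Suc s) = (\<lambda>x y. lmul (Gm \<alpha> (Suc s)) (Rr \<alpha> s) x y + lmul (Dm \<alpha> (Suc s)) (Q2 \<alpha> s) x y)"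

lemma lmul_add_left: "lmul (\<lambda>x l. F x l + H x l) P x y = lmul F P x y + lmul H P x y"
  unfolding lmul_def by (simp add: distrib_right sum.distrib)

lemma lmul_add_right: "lmul F (\<lambda>l y. P l y + H l y) x y = lmul F P x y + lmul F H x y"
  unfolding lmul_def by (simp add: distrib_left sum.distrib)

lemma lmul_cong: "(\<And>l. P l y = H l y) \<Longrightarrow> lmul F P x y = lmul F H x y"
  unfolding lmul_def by simp

lemma Em_split: "Em \<alpha> s x y = Q0 s x y + Q1 \<alpha> s x y + Q2 \<alpha> s x y + Rr \<alpha> s x y"
proof (induction s arbitrary: x y)
  case 0 then show ?case by simp
next
  case (Suc s)
  have G: "Gm \<alpha> (Suc s) = (\<lambda>x l. Am (Suc s) x l + Dm \<alpha> (Suc s) x l)"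
    by (auto simp: Dm_def)
  have "Em \<alpha> (Suc s) x y = lmul (Gm \<alpha> (Suc s)) (Em \<alpha> s) x y" by simp
  also have "\<dots> = lmul (Gm \<alpha> (Suc s)) (\<lambda>l y. (Q0 s l y + Q1 \<alpha> s l y + Q2 \<alpha> s l y) + Rr \<alpha> s l y) x y"
    by (rule lmul_cong) (rule Suc)
  also have "\<dots> = lmul (Gm \<alpha> (Suc s)) (\<lambda>l y. (Q0 s l y + Q1 \<alpha> s l y + Q2 \<alpha> s l y)) x y + lmul (Gm \<alpha> (Suc s)) (Rr \<alpha> s) x y"
    by (rule lmul_add_right)
  also have "lmul (Gm \<alpha> (Suc s)) (\<lambda>l y. (Q0 s l y + Q1 \<alpha> s l y + Q2 \<alpha> s l y)) x y
     = lmul (Am (Suc s)) (Q0 s) x y + lmul (Am (Suc s)) (Q1 \<alpha> s) x y + lmul (Am (Suc s)) (Q2 \<alpha> s) x y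
      + lmul (Dm \<alpha> (Suc s)) (Q0 s) x y + lmul (Dm \<alpha> (Suc s)) (Q1 \<alpha> s) x y + lmul (Dm \<alpha> (Suc s)) (Q2 \<alpha> s) x y"
    unfolding G lmul_add_left lmul_add_right by (simp only: add_ac)
  finally show ?case by (simp only: Em.simps Q0.simps Q1.simps Q2.simps Rr.simps add_ac)
qed

fun psi :: "nat \<Rightarrow> nat \<Rightarrow> nat \<Rightarrow> nat" where
  "psi 0 u x = x"
| "psi (Suc s) u x = (if Suc s \<le> u then x else psi s u (fF (Suc s) x))"

lemma psi_zero: "psi s u 0 = 0"
  by (induction s) (auto simp: fF_def)

lemma psi_same: "psi u u x = x"
  by (cases u) auto

lemma fF_pos: "1 \<le> x \<Longrightarrow> 1 \<le> fF s x"
  unfolding fF_def by auto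

lemma fF_in: "1 \<le> x \<Longrightarrow> fF s x \<in> {x-1..x+1}"
  unfolding fF_def by auto

lemma lmul_Am: "lmul (Am s) P x y = (if x = 0 then 0 else P (fF s x) y)"
proof (cases "x = 0")
  case True then show ?thesis unfolding lmul_def by (simp add: Gm_zero)
next
  case False
  have "lmul (Am s) P x y = (\<Sum>l\<in>{x-1..x+1}. if l = fF s x then P l y else 0)"
    unfolding lmul_def by (rule sum.cong) (use False in \<open>auto simp: Am_entry\<close>)
  also have "\<dots> = P (fF s x) y" using fF_in[of x s] False by simp
  finally show ?thesis using False by simp
qed

lemma Dm_zero: "Dm \<alpha> s 0 l = 0"
  unfolding Dm_def by (simp add: Gm_zero)

lemma lmul_Dm0: "lmul (Dm \<alpha> s) P 0 y = 0"
  unfolding lmul_def by (simp add: Dm_zero)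

lemma unroll:
  assumes Z0: "\<And>x y. Z 0 x y = 0"
    and ZS: "\<And>s x y. Z (Suc s) x y = (if x = 0 then 0 else Z s (fF (Suc s) x) y) + W s x y"
    and W0: "\<And>s y. W s 0 y = 0"
  shows "Z s x y = (\<Sum>t<s. W t (psi s (Suc t) x) y)"
proof (induction s arbitrary: x)
  case 0 then show ?case by (simp add: Z0)
next
  case (Suc s)
  show ?case
  proof (cases "x = 0")
    case True then show ?thesis by (simp add: ZS W0 psi_zero)
  next
    case False
    have "Z (Suc s) x y = (\<Sum>t<s. W t (psi s (Suc t) (fF (Suc s) x)) y) + W s x y"
      using False by (simp add: ZS Suc)
    also have "\<dots> = (\<Sum>t<Suc s. W t (psi (Suc s) (Suc t) x) y)"
      by (simp add: psi_same)
    finally show ?thesis .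
  qed
qed

lemma Q0_formula: "Q0 s x y = (if 1 \<le> x \<and> y = psi s 0 x then 1 else 0)"
proof (induction s arbitrary: x)
  case 0 then show ?case by (auto simp: mat_id_def)
next
  case (Suc s)
  show ?case using Suc fF_pos[of x "Suc s"] by (auto simp: lmul_Am)
qed

lemma Q1_formula: "Q1 \<alpha> s x y = (\<Sum>t<s. lmul (Dm \<alpha> (Suc t)) (Q0 t) (psi s (Suc t) x) y)"
  by (rule unroll[where Z="Q1 \<alpha>"]) (simp_all add: lmul_Am lmul_Dm0)

lemma Q2_formula: "Q2 \<alpha> s x y = (\<Sum>t<s. lmul (Dm \<alpha> (Suc t)) (Q1 \<alpha> t) (psi s (Suc t) x) y)"
  by (rule unroll[where Z="Q2 \<alpha>"]) (simp_all add: lmul_Am lmul_Dm0)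

lemma fF_bulk: "2 \<le> x \<Longrightarrow> fF s x = (if odd (x+s) then x+1 else x-1)"
  unfolding fF_def by auto

lemma psi_bulk: "u \<le> s \<Longrightarrow> s - u + 2 \<le> x \<Longrightarrow> psi s u x = (if odd (x+s) then x + (s-u) else x - (s-u))"
proof (induction s arbitrary: x)
  case 0 then show ?case by simp
next
  case (Suc s)
  show ?case
  proof (cases "Suc s \<le> u")
    case True then have "u = Suc s" using Suc by simp
    then show ?thesis by simp
  next
    case False
    then have us: "u \<le> s" by simp
    have x2: "2 \<le> x" using Suc False by simp
    define x' where "x' = fF (Suc s) x"
    have x': "x' = (if odd (x+Suc s) then x+1 else x-1)" unfolding x'_def by (rule fF_bulk[OF x2])
    have b: "s - u + 2 \<le> x'" using Suc.prems False x' by auto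
    have "psi (Suc s) u x = psi s u x'" using False by (simp add: x'_def)
    also have "\<dots> = (if odd (x'+s) then x' + (s-u) else x' - (s-u))" by (rule Suc.IH[OF us b])
    also have "\<dots> = (if odd (x+Suc s) then x + (Suc s-u) else x - (Suc s-u))"
      using x' us Suc.prems by auto
    finally show ?thesis .
  qed
qed

lemma fF_invol: "fF s (fF s x) = x"
  unfolding fF_def by (simp split: if_splits; presburger)

lemma inj_fF: "inj (fF s)"
  by (metis fF_invol injI)

lemma inj_psi: "inj (psi s u)"
proof (induction s)
  case 0 then show ?case by (simp add: inj_on_def)
next
  case (Suc s)
  show ?case
  proof (cases "Suc s \<le> u")
    case True then show ?thesis by (simp add: inj_on_def)
  next
    case False
    have eq: "psi (Suc s) u = psi s u \<circ> fF (Suc s)" using False by (auto simp: fun_eq_iff)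
    show ?thesis unfolding eq by (rule inj_compose[OF Suc inj_fF])
  qed
qed

lemma psi_le: "psi s u x \<le> x + s"
proof (induction s arbitrary: x)
  case 0 then show ?case by simp
next
  case (Suc s)
  have "fF (Suc s) x \<le> x + 1" unfolding fF_def by auto
  then show ?case using Suc[of "fF (Suc s) x"] by auto
qed

definition sw :: "(nat\<Rightarrow>complex) \<Rightarrow> nat \<Rightarrow> nat \<Rightarrow> complex" where
  "sw \<alpha> s x = (if odd (x+s) then bw \<alpha> s x else - cnj (bw \<alpha> s x))"

lemma Dm_entry:
  assumes "1 \<le> x" "\<not> (x = 1 \<and> odd s)"
  shows "Dm \<alpha> s x l = (if l = x then sw \<alpha> s x else if l = fF s x then of_real (rho (bw \<alpha> s x)) - 1 else 0)"
  using Gm_entry[OF assms, of \<alpha> l] Gm_entry[OF assms, of "\<lambda>_. 0" l]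
  by (auto simp: Dm_def sw_def bw_def rho_def)

lemma Dm_supp: "Dm \<alpha> s x l \<noteq> 0 \<Longrightarrow> l = x \<or> l = fF s x"
proof -
  assume a: "Dm \<alpha> s x l \<noteq> 0"
  consider "x = 0" | "x = 1 \<and> odd s" | "1 \<le> x \<and> \<not> (x = 1 \<and> odd s)" by linarith
  then show ?thesis
  proof cases
    case 1 then show ?thesis using a Dm_zero by auto
  next
    case 2 then show ?thesis using a Gm_one[of s] by (auto simp: Dm_def)
  next
    case 3 then show ?thesis using a Dm_entry[of x s \<alpha> l] by (auto split: if_splits)
  qed
qed

definition beta :: "(nat\<Rightarrow>complex) \<Rightarrow> nat \<Rightarrow> real" where
  "beta \<alpha> x = cmod (\<alpha> (x-1)) + cmod (\<alpha> (x-2))"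

lemma rho_diff: "cmod a \<le> 1 \<Longrightarrow> \<bar>rho a - 1\<bar> \<le> cmod a"
proof -
  assume a: "cmod a \<le> 1"
  have r: "rho a \<le> 1" "0 \<le> rho a" unfolding rho_def using a by (auto simp: power_le_one)
  have "1 - cmod a \<le> rho a"
  proof -
    have "(1 - cmod a)^2 \<le> 1 - (cmod a)^2" using a by (simp add: power2_eq_square algebra_simps mult_left_le)
    then have "sqrt ((1 - cmod a)^2) \<le> rho a" unfolding rho_def by (rule real_sqrt_le_mono)
    then show ?thesis using a by simp
  qed
  then show ?thesis using r by auto
qed

lemma Dm_bound:
  assumes "\<forall>j. cmod (\<alpha> j) < 1"
  shows "cmod (Dm \<alpha> s x l) \<le> beta \<alpha> x"
proof -
  have b0: "0 \<le> beta \<alpha> x" unfolding beta_def by simp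
  consider "x = 0" | "x = 1 \<and> odd s" | "1 \<le> x \<and> \<not> (x = 1 \<and> odd s)" by linarith
  then show ?thesis
  proof cases
    case 1 then show ?thesis using Dm_zero b0 by auto
  next
    case 2 then show ?thesis using Gm_one[of s] b0 by (auto simp: Dm_def)
  next
    case 3
    have bwb: "cmod (bw \<alpha> s x) \<le> beta \<alpha> x" unfolding bw_def beta_def by auto
    have bw1: "cmod (bw \<alpha> s x) \<le> 1" using assms unfolding bw_def by (auto intro: less_imp_le)
    have "cmod (of_real (rho (bw \<alpha> s x)) - 1) = \<bar>rho (bw \<alpha> s x) - 1\<bar>"
      by (metis norm_of_real of_real_1 of_real_diff)
    also have "\<dots> \<le> cmod (bw \<alpha> s x)" by (rule rho_diff[OF bw1])
    finally have e: "cmod (of_real (rho (bw \<alpha> s x)) - 1) \<le> beta \<alpha> x" using bwb by linarith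
    have sw: "cmod (sw \<alpha> s x) \<le> beta \<alpha> x" using bwb unfolding sw_def by auto
    show ?thesis using 3 Dm_entry[of x s \<alpha> l] e sw b0 by auto
  qed
qed

definition dd :: "(nat\<Rightarrow>complex) \<Rightarrow> nat \<Rightarrow> nat \<Rightarrow> nat \<Rightarrow> complex" where
  "dd \<alpha> t = lmul (Dm \<alpha> (Suc t)) (Q2 \<alpha> t)"

lemma R_col:
  assumes "\<forall>j. cmod (\<alpha> j) < 1"
  shows "L2_set (\<lambda>x. cmod (Rr \<alpha> s x y)) {..<Y} \<le> (\<Sum>t<s. \<Sum>x<Y+s. cmod (dd \<alpha> t x y))"
proof (induction s arbitrary: Y)
  case 0 then show ?case by (simp add: L2_set_def)
next
  case (Suc s)
  let ?a = "\<lambda>x. lmul (Gm \<alpha> (Suc s)) (Rr \<alpha> s) x y"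
  let ?b = "\<lambda>x. dd \<alpha> s x y"
  have "L2_set (\<lambda>x. cmod (Rr \<alpha> (Suc s) x y)) {..<Y} \<le> L2_set (\<lambda>x. cmod (?a x) + cmod (?b x)) {..<Y}"
    by (rule L2_set_mono) (auto simp: dd_def norm_triangle_ineq)
  also have "\<dots> \<le> L2_set (\<lambda>x. cmod (?a x)) {..<Y} + L2_set (\<lambda>x. cmod (?b x)) {..<Y}"
    by (rule L2_set_triangle_ineq)
  also have "L2_set (\<lambda>x. cmod (?a x)) {..<Y} \<le> L2_set (\<lambda>x. cmod (Rr \<alpha> s x y)) {..<Y+1}"
    unfolding L2_set_def lmul_vmul by (rule real_sqrt_le_mono) (rule unit_G[OF assms])
  also have "\<dots> \<le> (\<Sum>t<s. \<Sum>x<Y+1+s. cmod (dd \<alpha> t x y))" by (rule Suc.IH)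
  also have "L2_set (\<lambda>x. cmod (?b x)) {..<Y} \<le> (\<Sum>x<Y. cmod (?b x))"
    by (rule L2_set_le_sum) simp
  also have "\<dots> \<le> (\<Sum>x<Y + Suc s. cmod (?b x))"
    by (rule sum_lt_mono) auto
  finally show ?case by simp
qed

lemma R_entry:
  assumes "\<forall>j. cmod (\<alpha> j) < 1"
  shows "cmod (Rr \<alpha> s x y) \<le> (\<Sum>t<s. \<Sum>x'<x+1+s. cmod (dd \<alpha> t x' y))"
proof -
  have "cmod (Rr \<alpha> s x y) = sqrt ((cmod (Rr \<alpha> s x y))^2)" by simp
  also have "\<dots> \<le> L2_set (\<lambda>x. cmod (Rr \<alpha> s x y)) {..<x+1}"
    unfolding L2_set_def by (rule real_sqrt_le_mono) (rule member_le_sum, auto)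
  also have "\<dots> \<le> (\<Sum>t<s. \<Sum>x'<x+1+s. cmod (dd \<alpha> t x' y))" by (rule R_col[OF assms])
  finally show ?thesis .
qed

lemma nb_three: "(\<Sum>l\<in>{(x::nat)-1..x+1}. (h l::real)) \<le> h (x-1) + h x + h (x+1)" if "\<And>l. 0 \<le> h l"
proof (cases "x = 0")
  case True
  have "{x-1..x+1} = {0,1}" using True by auto
  then show ?thesis using True that[of 0] by simp
next
  case False
  have e: "{x-1..x+1} = {x-1, x, x+1}" using False by auto
  have "x - 1 \<notin> {x, x+1}" "x \<noteq> x+1" using False by auto
  then show ?thesis unfolding e by (simp add: add.assoc)
qed

lemma nb_sum:
  assumes "\<And>l. 0 \<le> (h l::real)"
  shows "(\<Sum>x<(Y::nat). \<Sum>l\<in>{x-1..x+1}. h l) \<le> 4 * (\<Sum>l<Y+1. h l)"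
proof -
  have S: "0 \<le> (\<Sum>l<Y+1. h l)" using assms by (simp add: sum_nonneg)
  have a: "(\<Sum>x<Y. h (x+1)) \<le> (\<Sum>l<Y+1. h l)"
    using sum.lessThan_Suc_shift[of h Y] assms[of 0] by simp
  have b: "(\<Sum>x<Y. h x) \<le> (\<Sum>l<Y+1. h l)" by (rule sum_lt_mono) (auto simp: assms)
  have c: "(\<Sum>x<Y. h (x-1)) \<le> 2 * (\<Sum>l<Y+1. h l)"
  proof (cases Y)
    case 0 then show ?thesis using S by simp
  next
    case (Suc n)
    have "(\<Sum>x<Y. h (x-1)) = h 0 + (\<Sum>x<n. h x)" unfolding Suc sum.lessThan_Suc_shift by simp
    also have "\<dots> \<le> (\<Sum>l<Y+1. h l) + (\<Sum>l<Y+1. h l)"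
    proof (rule add_mono)
      show "h 0 \<le> (\<Sum>l<Y+1. h l)" by (rule member_le_sum) (auto simp: assms)
      show "(\<Sum>x<n. h x) \<le> (\<Sum>l<Y+1. h l)" by (rule sum_lt_mono) (auto simp: assms Suc)
    qed
    finally show ?thesis by simp
  qed
  have "(\<Sum>x<Y. \<Sum>l\<in>{x-1..x+1}. h l) \<le> (\<Sum>x<Y. h (x-1) + h x + h (x+1))"
    by (rule sum_mono) (rule nb_three, rule assms)
  also have "\<dots> = (\<Sum>x<Y. h (x-1)) + (\<Sum>x<Y. h x) + (\<Sum>x<Y. h (x+1))" by (simp add: sum.distrib)
  also have "\<dots> \<le> 4 * (\<Sum>l<Y+1. h l)" using a b c by linarith
  finally show ?thesis .
qed

lemma nb_card: "(\<Sum>l\<in>{(x::nat)-1..x+1}. (c::real)) \<le> 3 * c" if "0 \<le> c"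
proof -
  have "card {x-1..x+1} \<le> 3" by simp
  then show ?thesis using that by (simp add: mult_right_mono)
qed

lemma inj_sum:
  assumes "inj \<phi>" "finite B" "\<phi> ` A \<subseteq> B" "\<And>z. 0 \<le> (g z::real)"
  shows "(\<Sum>l\<in>A. g (\<phi> l)) \<le> (\<Sum>z\<in>B. g z)"
proof -
  have fA: "finite A" using assms(1-3) by (meson finite_imageD finite_subset inj_on_subset subset_UNIV)
  have "(\<Sum>l\<in>A. g (\<phi> l)) = (\<Sum>z\<in>\<phi> ` A. g z)"
    using sum.reindex[of \<phi> A g] assms(1) by (simp add: inj_on_subset)
  also have "\<dots> \<le> (\<Sum>z\<in>B. g z)" by (rule sum_mono2) (use assms in auto)
  finally show ?thesis .
qed

lemma cube_sum: "0 \<le> a \<Longrightarrow> 0 \<le> b \<Longrightarrow> (a+b)^3 \<le> 4*(a^3+(b::real)^3)"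
proof -
  assume a: "0 \<le> a" and b: "0 \<le> b"
  have "0 \<le> 3*(a+b)*(a-b)^2" using a b by simp
  then show ?thesis by (simp add: power2_eq_square power3_eq_cube algebra_simps)
qed

lemma amgm3: "0 \<le> a \<Longrightarrow> 0 \<le> b \<Longrightarrow> 0 \<le> c \<Longrightarrow> a*b*c \<le> a^3 + b^3 + (c::real)^3"
proof -
  assume a: "0 \<le> a" and b: "0 \<le> b" and c: "0 \<le> c"
  define m where "m = max a (max b c)"
  have "a*b*c \<le> m*m*m" using a b c unfolding m_def
    by (intro mult_mono) auto
  also have "m*m*m = m^3" by (simp add: power3_eq_cube)
  also have "\<dots> \<le> a^3 + b^3 + c^3" using a b c unfolding m_def
    by (auto simp: max_def)
  finally show ?thesis .
qed

lemma beta_nn: "0 \<le> beta \<alpha> x" unfolding beta_def by simp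

lemma rowmass_step:
  assumes "\<forall>j. cmod (\<alpha> j) < 1" "\<And>l. (\<Sum>i<Ti. cmod (P l i)) \<le> V l"
  shows "(\<Sum>i<Ti. cmod (lmul (Dm \<alpha> s) P x i)) \<le> (\<Sum>l\<in>{x-1..x+1}. beta \<alpha> x * V l)"
proof -
  have "(\<Sum>i<Ti. cmod (lmul (Dm \<alpha> s) P x i)) \<le> (\<Sum>i<Ti. \<Sum>l\<in>{x-1..x+1}. beta \<alpha> x * cmod (P l i))"
  proof (rule sum_mono)
    fix i
    have "cmod (lmul (Dm \<alpha> s) P x i) \<le> (\<Sum>l\<in>{x-1..x+1}. cmod (Dm \<alpha> s x l * P l i))"
      unfolding lmul_def by (rule norm_sum)
    also have "\<dots> \<le> (\<Sum>l\<in>{x-1..x+1}. beta \<alpha> x * cmod (P l i))"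
      by (rule sum_mono) (simp add: norm_mult Dm_bound[OF assms(1)] mult_right_mono)
    finally show "cmod (lmul (Dm \<alpha> s) P x i) \<le> (\<Sum>l\<in>{x-1..x+1}. beta \<alpha> x * cmod (P l i))" .
  qed
  also have "\<dots> = (\<Sum>l\<in>{x-1..x+1}. beta \<alpha> x * (\<Sum>i<Ti. cmod (P l i)))"
    by (subst sum.swap) (simp add: sum_distrib_left)
  also have "\<dots> \<le> (\<Sum>l\<in>{x-1..x+1}. beta \<alpha> x * V l)"
    by (rule sum_mono) (simp add: assms(2) beta_nn mult_left_mono)
  finally show ?thesis .
qed

lemma rowmass_sum:
  assumes "\<And>t. t < n \<Longrightarrow> (\<Sum>i<Ti. cmod (f t i)) \<le> V t"
  shows "(\<Sum>i<Ti. cmod (\<Sum>t<n. f t i)) \<le> (\<Sum>t<n. V t)"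
proof -
  have "(\<Sum>i<Ti. cmod (\<Sum>t<n. f t i)) \<le> (\<Sum>i<Ti. \<Sum>t<n. cmod (f t i))"
    by (rule sum_mono) (rule norm_sum)
  also have "\<dots> = (\<Sum>t<n. \<Sum>i<Ti. cmod (f t i))" by (rule sum.swap)
  also have "\<dots> \<le> (\<Sum>t<n. V t)" by (rule sum_mono) (use assms in auto)
  finally show ?thesis .
qed

lemma Q0_rowmass: "(\<Sum>i<Ti. cmod (Q0 t l i)) \<le> 1"
proof -
  have e: "(\<lambda>i. cmod (Q0 t l i)) = (\<lambda>i. if i = psi t 0 l then (if 1 \<le> l then 1 else 0) else 0)"
    by (auto simp: Q0_formula)
  show ?thesis unfolding e sum.delta[OF finite_lessThan] by auto
qed

definition V1 :: "(nat\<Rightarrow>complex) \<Rightarrow> nat \<Rightarrow> nat \<Rightarrow> real" where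
  "V1 \<alpha> t2 l2 = (\<Sum>t1<t2. \<Sum>l1\<in>{psi t2 (Suc t1) l2 - 1..psi t2 (Suc t1) l2 + 1}. beta \<alpha> (psi t2 (Suc t1) l2) * 1)"

definition V2 :: "(nat\<Rightarrow>complex) \<Rightarrow> nat \<Rightarrow> nat \<Rightarrow> real" where
  "V2 \<alpha> t l = (\<Sum>t2<t. \<Sum>l2\<in>{psi t (Suc t2) l - 1..psi t (Suc t2) l + 1}. beta \<alpha> (psi t (Suc t2) l) * V1 \<alpha> t2 l2)"

lemma Q1_rowmass: assumes "\<forall>j. cmod (\<alpha> j) < 1" shows "(\<Sum>i<Ti. cmod (Q1 \<alpha> t2 l2 i)) \<le> V1 \<alpha> t2 l2"
  unfolding Q1_formula V1_def
  by (rule rowmass_sum, rule rowmass_step[OF assms], rule Q0_rowmass)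

lemma Q2_rowmass: assumes "\<forall>j. cmod (\<alpha> j) < 1" shows "(\<Sum>i<Ti. cmod (Q2 \<alpha> t l i)) \<le> V2 \<alpha> t l"
  unfolding Q2_formula V2_def
  by (rule rowmass_sum, rule rowmass_step[OF assms], rule Q1_rowmass[OF assms])

lemma dd_rowmass: assumes "\<forall>j. cmod (\<alpha> j) < 1"
  shows "(\<Sum>i<Ti. cmod (dd \<alpha> t x i)) \<le> (\<Sum>l\<in>{x-1..x+1}. beta \<alpha> x * V2 \<alpha> t l)"
  unfolding dd_def by (rule rowmass_step[OF assms], rule Q2_rowmass[OF assms])

declare sum.cl_ivl_Suc[simp del]


lemma swap3: "(\<Sum>x\<in>A. \<Sum>l\<in>B x. \<Sum>t\<in>C. f x l t) = (\<Sum>t\<in>C. \<Sum>x\<in>A. \<Sum>l\<in>B x. f x l t)"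
proof -
  have "(\<Sum>x\<in>A. \<Sum>l\<in>B x. \<Sum>t\<in>C. f x l t) = (\<Sum>x\<in>A. \<Sum>t\<in>C. \<Sum>l\<in>B x. f x l t)"
    by (rule sum.cong[OF refl], rule sum.swap)
  also have "\<dots> = (\<Sum>t\<in>C. \<Sum>x\<in>A. \<Sum>l\<in>B x. f x l t)" by (rule sum.swap)
  finally show ?thesis .
qed

lemma lin3: "A \<le> 9*X \<Longrightarrow> B \<le> 12*X \<Longrightarrow> C \<le> 16*X \<Longrightarrow> 3*(A+B+C) \<le> 111*(X::real)"
  by (simp add: algebra_simps)

lemma mass_bound:
  assumes \<alpha>: "\<forall>j. cmod (\<alpha> j) < 1"
    and HB: "\<And>(\<phi>::nat\<Rightarrow>nat) (A::nat set). inj \<phi> \<Longrightarrow> finite A \<Longrightarrow> (\<Sum>l\<in>A. (beta \<alpha> (\<phi> l))^3) \<le> SB"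
  shows "(\<Sum>x<Y. \<Sum>l\<in>{x-1..x+1}. beta \<alpha> x * V2 \<alpha> t l) \<le> 111 * (real t)^2 * SB"
proof -
  have SB0: "0 \<le> SB" using HB[of id "{}"] by simp
  let ?b = "beta \<alpha>"
  let ?u = "\<lambda>t2 l. psi t (Suc t2) l"
  let ?u' = "\<lambda>t2 t1 l2. psi t2 (Suc t1) l2"
  have bn: "\<And>x. 0 \<le> ?b x" by (rule beta_nn)
  have V1b: "V1 \<alpha> t2 l2 \<le> (\<Sum>t1<t2. 3 * ?b (?u' t2 t1 l2))" for t2 l2
    unfolding V1_def by (intro sum_mono) (metis nb_card bn mult_1_right)
  define T where "T x l = (\<Sum>t2<t. \<Sum>l2\<in>{?u t2 l - 1..?u t2 l + 1}. \<Sum>t1<t2.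
       (?b x)^3 + (?b (?u t2 l))^3 + (?b (?u' t2 t1 l2))^3)" for x l
  have step1: "?b x * V2 \<alpha> t l \<le> 3 * T x l" for x l
  proof -
    have "?b x * V2 \<alpha> t l = (\<Sum>t2<t. \<Sum>l2\<in>{?u t2 l - 1..?u t2 l + 1}. ?b x * ?b (?u t2 l) * V1 \<alpha> t2 l2)"
      unfolding V2_def by (simp add: sum_distrib_left mult.assoc)
    also have "\<dots> \<le> (\<Sum>t2<t. \<Sum>l2\<in>{?u t2 l - 1..?u t2 l + 1}. 3 * (\<Sum>t1<t2.
       (?b x)^3 + (?b (?u t2 l))^3 + (?b (?u' t2 t1 l2))^3))"
    proof (intro sum_mono)
      fix t2 l2
      have "?b x * ?b (?u t2 l) * V1 \<alpha> t2 l2 \<le> ?b x * ?b (?u t2 l) * (\<Sum>t1<t2. 3 * ?b (?u' t2 t1 l2))"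
        by (rule mult_left_mono[OF V1b]) (simp add: bn)
      also have "\<dots> = 3 * (\<Sum>t1<t2. ?b x * ?b (?u t2 l) * ?b (?u' t2 t1 l2))"
        by (simp add: sum_distrib_left mult_ac)
      also have "\<dots> \<le> 3 * (\<Sum>t1<t2. (?b x)^3 + (?b (?u t2 l))^3 + (?b (?u' t2 t1 l2))^3)"
        by (simp add: sum_mono amgm3 bn)
      finally show "?b x * ?b (?u t2 l) * V1 \<alpha> t2 l2 \<le> 3 * (\<Sum>t1<t2. (?b x)^3 + (?b (?u t2 l))^3 + (?b (?u' t2 t1 l2))^3)" .
    qed
    also have "\<dots> = 3 * T x l" unfolding T_def by (simp add: sum_distrib_left)
    finally show ?thesis .
  qed
  define TA where "TA x l = (\<Sum>t2<t. \<Sum>l2\<in>{?u t2 l - 1..?u t2 l + 1}. \<Sum>t1<t2. (?b x)^3)" for x l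
  define TB where "TB (x::nat) l = (\<Sum>t2<t. \<Sum>l2\<in>{?u t2 l - 1..?u t2 l + 1}. \<Sum>t1<t2. (?b (?u t2 l))^3)" for x l
  define H where "H t2 t1 m = (\<Sum>l2\<in>{m - 1..m + 1}. (?b (?u' t2 t1 l2))^3)" for t2 t1 m
  define TC where "TC (x::nat) l = (\<Sum>t2<t. \<Sum>t1<t2. H t2 t1 (?u t2 l))" for x l
  have Tsplit: "T x l = TA x l + TB x l + TC x l" for x l
  proof -
    have "TC x l = (\<Sum>t2<t. \<Sum>l2\<in>{?u t2 l - 1..?u t2 l + 1}. \<Sum>t1<t2. (?b (?u' t2 t1 l2))^3)"
      unfolding TC_def H_def by (rule sum.cong[OF refl]) (rule sum.swap)
    then show ?thesis unfolding T_def TA_def TB_def by (simp only: sum.distrib)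
  qed
  have TAb: "TA x l \<le> 3 * (real t)^2 * (?b x)^3" for x l
  proof -
    have "TA x l \<le> (\<Sum>t2<t. \<Sum>l2\<in>{?u t2 l - 1..?u t2 l + 1}. real t * (?b x)^3)"
      unfolding TA_def by (intro sum_mono) (simp add: mult_right_mono bn)
    also have "\<dots> \<le> (\<Sum>t2<t. 3 * (real t * (?b x)^3))"
      by (intro sum_mono nb_card) (simp add: bn)
    also have "\<dots> = 3 * (real t)^2 * (?b x)^3" by (simp add: power2_eq_square)
    finally show ?thesis .
  qed
  have SA: "(\<Sum>x<Y. \<Sum>l\<in>{x-1..x+1}. TA x l) \<le> 9 * (real t)^2 * SB"
  proof -
    have "(\<Sum>l\<in>{x-1..x+1}. TA x l) \<le> 3 * (3 * (real t)^2 * (?b x)^3)" for x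
    proof -
      have "(\<Sum>l\<in>{x-1..x+1}. TA x l) \<le> (\<Sum>l\<in>{x-1..x+1}. 3 * (real t)^2 * (?b x)^3)"
        by (rule sum_mono) (rule TAb)
      also have "\<dots> \<le> 3 * (3 * (real t)^2 * (?b x)^3)" by (rule nb_card) (simp add: bn)
      finally show ?thesis .
    qed
    then have "(\<Sum>x<Y. \<Sum>l\<in>{x-1..x+1}. TA x l) \<le> (\<Sum>x<Y. 3 * (3 * (real t)^2 * (?b x)^3))"
      by (intro sum_mono)
    also have "\<dots> = 9 * (real t)^2 * (\<Sum>x<Y. (?b (id x))^3)" by (simp add: sum_distrib_left mult.assoc)
    also have "\<dots> \<le> 9 * (real t)^2 * SB" by (intro mult_left_mono HB) auto
    finally show ?thesis .
  qed
  have TBb: "TB x l \<le> (\<Sum>t2<t. 3 * (real t * (?b (?u t2 l))^3))" for x l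
    unfolding TB_def
  proof (intro sum_mono)
    fix t2 assume "t2 \<in> {..<t}"
    have "(\<Sum>l2\<in>{?u t2 l - 1..?u t2 l + 1}. \<Sum>t1<t2. (?b (?u t2 l))^3) \<le> (\<Sum>l2\<in>{?u t2 l - 1..?u t2 l + 1}. real t * (?b (?u t2 l))^3)"
      using \<open>t2 \<in> {..<t}\<close> by (intro sum_mono) (simp add: bn mult_right_mono)
    also have "\<dots> \<le> 3 * (real t * (?b (?u t2 l))^3)" by (rule nb_card) (simp add: bn)
    finally show "(\<Sum>l2\<in>{?u t2 l - 1..?u t2 l + 1}. \<Sum>t1<t2. (?b (?u t2 l))^3) \<le> 3 * (real t * (?b (?u t2 l))^3)" .
  qed
  have SB': "(\<Sum>x<Y. \<Sum>l\<in>{x-1..x+1}. TB x l) \<le> 12 * (real t)^2 * SB"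
  proof -
    have "(\<Sum>x<Y. \<Sum>l\<in>{x-1..x+1}. TB x l) \<le> (\<Sum>x<Y. \<Sum>l\<in>{x-1..x+1}. \<Sum>t2<t. 3 * (real t * (?b (?u t2 l))^3))"
      by (intro sum_mono TBb)
    also have "\<dots> = (\<Sum>t2<t. 3 * real t * (\<Sum>x<Y. \<Sum>l\<in>{x-1..x+1}. (?b (?u t2 l))^3))"
      by (subst swap3, simp add: sum_distrib_left mult.assoc)
    also have "\<dots> \<le> (\<Sum>t2<t. 3 * real t * (4 * SB))"
    proof (intro sum_mono mult_left_mono)
      fix t2
      have "(\<Sum>x<Y. \<Sum>l\<in>{x-1..x+1}. (?b (?u t2 l))^3) \<le> 4 * (\<Sum>l<Y+1. (?b (?u t2 l))^3)"
        by (rule nb_sum) (simp add: bn)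
      also have "\<dots> \<le> 4 * SB" by (intro mult_left_mono HB inj_psi) auto
      finally show "(\<Sum>x<Y. \<Sum>l\<in>{x-1..x+1}. (?b (?u t2 l))^3) \<le> 4 * SB" .
    qed auto
    also have "\<dots> = 12 * (real t)^2 * SB" by (simp add: power2_eq_square)
    finally show ?thesis .
  qed
  have Hb: "(\<Sum>x<Y. \<Sum>l\<in>{x-1..x+1}. H t2 t1 (?u t2 l)) \<le> 16 * SB" if "t2 < t" for t2 t1
  proof -
    have Hn: "0 \<le> H t2 t1 m" for m unfolding H_def by (simp add: sum_nonneg bn)
    have "(\<Sum>x<Y. \<Sum>l\<in>{x-1..x+1}. H t2 t1 (?u t2 l)) \<le> 4 * (\<Sum>l<Y+1. H t2 t1 (?u t2 l))"
      by (rule nb_sum) (rule Hn)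
    also have "(\<Sum>l<Y+1. H t2 t1 (?u t2 l)) \<le> (\<Sum>m<Y+1+t. H t2 t1 m)"
    proof (rule inj_sum[OF inj_psi])
      show "?u t2 ` {..<Y+1} \<subseteq> {..<Y+1+t}" using psi_le[of t "Suc t2"] by (force intro: le_less_trans[OF psi_le])
    qed (auto simp: Hn)
    also have "(\<Sum>m<Y+1+t. H t2 t1 m) \<le> 4 * (\<Sum>l2<Y+1+t+1. (?b (?u' t2 t1 l2))^3)"
      unfolding H_def by (rule nb_sum) (simp add: bn)
    also have "\<dots> \<le> 4 * SB" by (intro mult_left_mono HB inj_psi) auto
    finally show ?thesis by linarith
  qed
  have SC: "(\<Sum>x<Y. \<Sum>l\<in>{x-1..x+1}. TC x l) \<le> 16 * (real t)^2 * SB"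
  proof -
    have "(\<Sum>x<Y. \<Sum>l\<in>{x-1..x+1}. TC x l) = (\<Sum>t2<t. \<Sum>t1<t2. \<Sum>x<Y. \<Sum>l\<in>{x-1..x+1}. H t2 t1 (?u t2 l))"
      unfolding TC_def by (subst swap3, rule sum.cong[OF refl], rule swap3)
    also have "\<dots> \<le> (\<Sum>t2<t. \<Sum>t1<t2. 16 * SB)"
      by (intro sum_mono Hb) auto
    also have "\<dots> \<le> (\<Sum>t2<t. real t * (16 * SB))"
      by (intro sum_mono) (auto simp: SB0 mult_right_mono)
    also have "\<dots> = 16 * (real t)^2 * SB" by (simp add: power2_eq_square)
    finally show ?thesis .
  qed
  have "(\<Sum>x<Y. \<Sum>l\<in>{x-1..x+1}. ?b x * V2 \<alpha> t l) \<le> (\<Sum>x<Y. \<Sum>l\<in>{x-1..x+1}. 3 * (TA x l + TB x l + TC x l))"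
    by (intro sum_mono) (metis step1 Tsplit)
  also have "\<dots> = 3 * ((\<Sum>x<Y. \<Sum>l\<in>{x-1..x+1}. TA x l) + (\<Sum>x<Y. \<Sum>l\<in>{x-1..x+1}. TB x l) + (\<Sum>x<Y. \<Sum>l\<in>{x-1..x+1}. TC x l))"
    by (simp add: sum.distrib sum_distrib_left)
  also have "\<dots> \<le> 111 * ((real t)^2 * SB)" using SA SB' SC unfolding mult.assoc by (rule lin3)
  finally show ?thesis by (simp add: mult.assoc)
qed

declare sum.cl_ivl_Suc[simp del]

lemma R_total:
  assumes \<alpha>: "\<forall>j. cmod (\<alpha> j) < 1"
    and HB: "\<And>(\<phi>::nat\<Rightarrow>nat) (A::nat set). inj \<phi> \<Longrightarrow> finite A \<Longrightarrow> (\<Sum>l\<in>A. (beta \<alpha> (\<phi> l))^3) \<le> SB"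
  shows "(\<Sum>i<Ti. cmod (Rr \<alpha> s i i)) \<le> 111 * (real s)^3 * SB"
proof -
  have SB0: "0 \<le> SB" using HB[of id "{}"] by simp
  have "(\<Sum>i<Ti. cmod (Rr \<alpha> s i i)) \<le> (\<Sum>i<Ti. \<Sum>t<s. \<Sum>x<Ti+s. cmod (dd \<alpha> t x i))"
  proof (rule sum_mono)
    fix i assume i: "i \<in> {..<Ti}"
    have "cmod (Rr \<alpha> s i i) \<le> (\<Sum>t<s. \<Sum>x<i+1+s. cmod (dd \<alpha> t x i))" by (rule R_entry[OF \<alpha>])
    also have "\<dots> \<le> (\<Sum>t<s. \<Sum>x<Ti+s. cmod (dd \<alpha> t x i))"
      by (intro sum_mono sum_lt_mono) (use i in auto)
    finally show "cmod (Rr \<alpha> s i i) \<le> (\<Sum>t<s. \<Sum>x<Ti+s. cmod (dd \<alpha> t x i))" .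
  qed
  also have "\<dots> = (\<Sum>t<s. \<Sum>x<Ti+s. \<Sum>i<Ti. cmod (dd \<alpha> t x i))"
    by (subst sum.swap, rule sum.cong[OF refl], rule sum.swap)
  also have "\<dots> \<le> (\<Sum>t<s. \<Sum>x<Ti+s. \<Sum>l\<in>{x-1..x+1}. beta \<alpha> x * V2 \<alpha> t l)"
    by (intro sum_mono dd_rowmass[OF \<alpha>])
  also have "\<dots> \<le> (\<Sum>t<s. 111 * (real s)^2 * SB)"
  proof (intro sum_mono)
    fix t assume "t \<in> {..<s}"
    then have "111 * (real t)^2 * SB \<le> 111 * (real s)^2 * SB"
      using SB0 by (intro mult_right_mono mult_left_mono power_mono) auto
    then show "(\<Sum>x<Ti+s. \<Sum>l\<in>{x-1..x+1}. beta \<alpha> x * V2 \<alpha> t l) \<le> 111 * (real s)^2 * SB"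
      using mass_bound[OF \<alpha> HB] by (meson order_trans)
  qed
  also have "\<dots> = 111 * (real s)^3 * SB" by (simp add: power2_eq_square power3_eq_cube)
  finally show ?thesis .
qed

lemma lmul_Dm_two:
  assumes "1 \<le> x" "\<not> (x = 1 \<and> odd s)"
  shows "lmul (Dm \<alpha> s) P x y = Dm \<alpha> s x x * P x y + Dm \<alpha> s x (fF s x) * P (fF s x) y"
  unfolding lmul_def by (rule sum_two[OF assms]) (use Dm_supp in force)

lemma psi_par: "u \<le> s \<Longrightarrow> s - u + 2 \<le> x \<Longrightarrow> even (psi s u x + x + (s-u))"
  using psi_bulk[of u s x] by auto

lemma Q0_diag: "1 \<le> k \<Longrightarrow> 2*k+3 \<le> i \<Longrightarrow> Q0 (2*k) i i = 0"
  using psi_bulk[of 0 "2*k" i] by (auto simp: Q0_formula)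

lemma Q1_diag:
  assumes "1 \<le> k" "2*k+3 \<le> i"
  shows "Q1 \<alpha> (2*k) i i = 0"
proof -
  have "lmul (Dm \<alpha> (Suc t)) (Q0 t) (psi (2*k) (Suc t) i) i = 0" if t: "t < 2*k" for t
  proof -
    define u where "u = psi (2*k) (Suc t) i"
    have u: "u = (if odd i then i + (2*k - Suc t) else i - (2*k - Suc t))"
      unfolding u_def using psi_bulk[of "Suc t" "2*k" i] t assms by auto
    have u3: "3 \<le> u" using u t assms by auto
    have ut: "t + 2 \<le> u" using u t assms by auto
    have stay: "Q0 t u i = 0"
    proof -
      have e: "even (psi t 0 u + u + t)" using psi_par[of 0 t u] ut by simp
      have "psi t 0 u \<noteq> i"
      proof
        assume "psi t 0 u = i"
        then have "even (i + u + t)" using e by simp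
        then show False using u t assms by (auto split: if_splits; presburger)
      qed
      then show ?thesis by (simp add: Q0_formula)
    qed
    have sw: "Q0 t (fF (Suc t) u) i = 0"
    proof -
      have f: "fF (Suc t) u = (if odd i then u + 1 else u - 1)" using fF_bulk[of u "Suc t"] u3 u t by auto
      have "psi t 0 (fF (Suc t) u) = (if odd (fF (Suc t) u + t) then fF (Suc t) u + t else fF (Suc t) u - t)"
        using psi_bulk[of 0 t "fF (Suc t) u"] f u t assms by auto
      then have "psi t 0 (fF (Suc t) u) \<noteq> i" using f u t assms by auto
      then show ?thesis by (simp add: Q0_formula)
    qed
    show ?thesis unfolding u_def[symmetric]
      using lmul_Dm_two[of u "Suc t" \<alpha> "Q0 t" i] u3 stay sw by simp
  qed
  then show ?thesis unfolding Q1_formula by simp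
qed

declare sum.cl_ivl_Suc[simp del]

lemma psi_up: "u \<le> s \<Longrightarrow> s - u + 2 \<le> x \<Longrightarrow> odd (x+s) \<Longrightarrow> psi s u x = x + (s-u)"
  using psi_bulk by auto
lemma psi_dn: "u \<le> s \<Longrightarrow> s - u + 2 \<le> x \<Longrightarrow> \<not> odd (x+s) \<Longrightarrow> psi s u x = x - (s-u)"
  using psi_bulk by auto
lemma fF_up: "2 \<le> x \<Longrightarrow> odd (x+s) \<Longrightarrow> fF s x = x + 1"
  using fF_bulk by auto
lemma fF_dn: "2 \<le> x \<Longrightarrow> \<not> odd (x+s) \<Longrightarrow> fF s x = x - 1"
  using fF_bulk by auto

lemma Q0_eq: "1 \<le> x \<Longrightarrow> Q0 t x i = (if i = psi t 0 x then 1 else 0)"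
  by (simp add: Q0_formula)

context
  fixes k i t1 t2 :: nat
  assumes k: "1 \<le> k" and i: "2*k+3 \<le> i" and t: "t1 < t2" "t2 < 2*k"
begin

definition "uu = psi (2*k) (Suc t2) i"
definition "us = psi t2 (Suc t1) uu"
definition "ue = psi t2 (Suc t1) (fF (Suc t2) uu)"

lemma case_odd:
  assumes o: "odd i"
  shows "uu = i + 2*k - Suc t2" "us = i + 2*k + t1 - 2*t2"
    "Q0 t1 us i = (if t2 = t1 + k then 1 else 0)"
    "Q0 t1 (fF (Suc t1) us) i = 0"
    "Q0 t1 ue i = 0"
    "Q0 t1 (fF (Suc t1) ue) i = 0"
proof -
  show u: "uu = i + 2*k - Suc t2" unfolding uu_def using psi_up[of "Suc t2" "2*k" i] t o i by auto
  show s: "us = i + 2*k + t1 - 2*t2" unfolding us_def u using psi_dn[of "Suc t1" t2 "i + 2*k - Suc t2"] t o i by auto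
  have p: "psi t1 0 us = i + 2*k + 2*t1 - 2*t2" unfolding s using psi_up[of 0 t1 "i + 2*k + t1 - 2*t2"] t o i by auto
  show "Q0 t1 us i = (if t2 = t1 + k then 1 else 0)" using Q0_eq[of us t1 i] s p t i by auto
  have f: "fF (Suc t1) us = us - 1" using fF_dn[of us "Suc t1"] s t o i by auto
  have p2: "psi t1 0 (us - 1) = us - 1 - t1" using psi_dn[of 0 t1 "us - 1"] s t o i by auto
  show "Q0 t1 (fF (Suc t1) us) i = 0" unfolding f using Q0_eq[of "us - 1" t1 i] p2 s t i o by auto presburger
  have fu: "fF (Suc t2) uu = uu + 1" using fF_up[of uu "Suc t2"] u t o i by auto
  have e: "ue = i + 2*k - Suc t1" unfolding ue_def fu unfolding u using psi_up[of "Suc t1" t2 "i + 2*k - Suc t2 + 1"] t o i by auto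
  have p3: "psi t1 0 ue = ue - t1" using psi_dn[of 0 t1 ue] e t o i by auto
  show "Q0 t1 ue i = 0" using Q0_eq[of ue t1 i] p3 e t i o by auto presburger
  have f2: "fF (Suc t1) ue = ue + 1" using fF_up[of ue "Suc t1"] e t o i by auto
  have p4: "psi t1 0 (ue + 1) = ue + 1 + t1" using psi_up[of 0 t1 "ue+1"] e t o i by auto
  show "Q0 t1 (fF (Suc t1) ue) i = 0" unfolding f2 using Q0_eq[of "ue+1" t1 i] p4 e t i o by auto
qed

lemma case_even:
  assumes o: "\<not> odd i"
  shows "uu = i + Suc t2 - 2*k" "us = i + 2*t2 - t1 - 2*k"
    "Q0 t1 us i = (if t2 = t1 + k then 1 else 0)"
    "Q0 t1 (fF (Suc t1) us) i = 0"
    "Q0 t1 ue i = 0"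
    "Q0 t1 (fF (Suc t1) ue) i = 0"
proof -
  show u: "uu = i + Suc t2 - 2*k" unfolding uu_def using psi_dn[of "Suc t2" "2*k" i] t o i by auto
  show s: "us = i + 2*t2 - t1 - 2*k" unfolding us_def u using psi_up[of "Suc t1" t2 "i + Suc t2 - 2*k"] t o i by auto
  have p: "psi t1 0 us = us - t1" using psi_dn[of 0 t1 us] s t o i by auto
  show "Q0 t1 us i = (if t2 = t1 + k then 1 else 0)" using Q0_eq[of us t1 i] s p t i by auto
  have f: "fF (Suc t1) us = us + 1" using fF_up[of us "Suc t1"] s t o i by auto
  have p2: "psi t1 0 (us + 1) = us + 1 + t1" using psi_up[of 0 t1 "us + 1"] s t o i by auto
  show "Q0 t1 (fF (Suc t1) us) i = 0" unfolding f using Q0_eq[of "us + 1" t1 i] p2 s t i o by auto presburger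
  have fu: "fF (Suc t2) uu = uu - 1" using fF_dn[of uu "Suc t2"] u t o i by auto
  have e: "ue = i + Suc t1 - 2*k" unfolding ue_def fu unfolding u using psi_dn[of "Suc t1" t2 "i + Suc t2 - 2*k - 1"] t o i by auto
  have p3: "psi t1 0 ue = ue + t1" using psi_up[of 0 t1 ue] e t o i by auto
  show "Q0 t1 ue i = 0" using Q0_eq[of ue t1 i] p3 e t i o by auto presburger
  have f2: "fF (Suc t1) ue = ue - 1" using fF_dn[of ue "Suc t1"] e t o i by auto
  have p4: "psi t1 0 (ue - 1) = ue - 1 - t1" using psi_dn[of 0 t1 "ue-1"] e t o i by auto
  show "Q0 t1 (fF (Suc t1) ue) i = 0" unfolding f2 using Q0_eq[of "ue-1" t1 i] p4 e t i o by auto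
qed

end

declare sum.cl_ivl_Suc[simp del]

definition gi :: "(nat\<Rightarrow>complex) \<Rightarrow> nat \<Rightarrow> int \<Rightarrow> complex" where
  "gi \<alpha> k j = (if 0 \<le> j then cnj (\<alpha> (nat j)) * \<alpha> (nat j + k) else 0)"

definition qv :: "(nat\<Rightarrow>complex) \<Rightarrow> nat \<Rightarrow> nat \<Rightarrow> complex" where
  "qv \<alpha> k i = - (\<Sum>t<k. if odd i then gi \<alpha> k (int i - int t - 2) else gi \<alpha> k (int i + int t - int k - 1))"

lemma us_ge: assumes "1 \<le> k" "2*k+3 \<le> i" "t1 < t2" "t2 < 2*k" shows "3 \<le> us k i t1 t2"
  using case_odd(2)[OF assms] case_even(2)[OF assms] assms by (cases "odd i") auto

lemma ue_ge: assumes "1 \<le> k" "2*k+3 \<le> i" "t1 < t2" "t2 < 2*k" shows "3 \<le> ue k i t1 t2"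
proof -
  have u: "uu k i t2 = (if odd i then i + 2*k - Suc t2 else i + Suc t2 - 2*k)"
    using case_odd(1)[OF assms] case_even(1)[OF assms] by auto
  have f: "fF (Suc t2) (uu k i t2) = (if odd i then uu k i t2 + 1 else uu k i t2 - 1)"
    using fF_bulk[of "uu k i t2" "Suc t2"] u assms by auto
  have "ue k i t1 t2 = (if odd i then i + 2*k - Suc t1 else i + Suc t1 - 2*k)"
    unfolding ue_def[OF assms] f unfolding u
    using psi_bulk[of "Suc t1" t2 "i + 2*k - Suc t2 + 1"] psi_bulk[of "Suc t1" t2 "i + Suc t2 - 2*k - 1"] assms
    by auto
  then show ?thesis using assms by auto
qed

lemma uu_ge: assumes "1 \<le> k" "2*k+3 \<le> i" "t2 < 2*k" shows "3 \<le> psi (2*k) (Suc t2) i"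
  using psi_bulk[of "Suc t2" "2*k" i] assms by auto

lemma Q1_stay:
  assumes k: "1 \<le> k" and i: "2*k+3 \<le> i" and t2: "t2 < 2*k"
  shows "Q1 \<alpha> t2 (psi (2*k) (Suc t2) i) i
     = (\<Sum>t1<t2. if t2 = t1 + k then Dm \<alpha> (Suc t1) (us k i t1 t2) (us k i t1 t2) else 0)"
  unfolding Q1_formula
proof (rule sum.cong[OF refl])
  fix t1 assume "t1 \<in> {..<t2}"
  then have t: "t1 < t2" by simp
  note a = k i t t2
  have e: "psi t2 (Suc t1) (psi (2*k) (Suc t2) i) = us k i t1 t2" using us_def[OF a] uu_def[OF a] by simp
  have s3: "3 \<le> us k i t1 t2" by (rule us_ge[OF a])
  have Q: "Q0 t1 (us k i t1 t2) i = (if t2 = t1 + k then 1 else 0)" "Q0 t1 (fF (Suc t1) (us k i t1 t2)) i = 0"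
    using case_odd(3,4)[OF a] case_even(3,4)[OF a] by (cases "odd i", auto)+
  show "lmul (Dm \<alpha> (Suc t1)) (Q0 t1) (psi t2 (Suc t1) (psi (2*k) (Suc t2) i)) i =
        (if t2 = t1 + k then Dm \<alpha> (Suc t1) (us k i t1 t2) (us k i t1 t2) else 0)"
    unfolding e using lmul_Dm_two[of "us k i t1 t2" "Suc t1" \<alpha> "Q0 t1" i] s3 Q by simp
qed

lemma Q1_switch:
  assumes k: "1 \<le> k" and i: "2*k+3 \<le> i" and t2: "t2 < 2*k"
  shows "Q1 \<alpha> t2 (fF (Suc t2) (psi (2*k) (Suc t2) i)) i = 0"
  unfolding Q1_formula
proof (rule sum.neutral, rule ballI)
  fix t1 assume "t1 \<in> {..<t2}"
  then have t: "t1 < t2" by simp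
  note a = k i t t2
  have e: "psi t2 (Suc t1) (fF (Suc t2) (psi (2*k) (Suc t2) i)) = ue k i t1 t2" using ue_def[OF a] uu_def[OF a] by simp
  have s3: "3 \<le> ue k i t1 t2" by (rule ue_ge[OF a])
  have Q: "Q0 t1 (ue k i t1 t2) i = 0" "Q0 t1 (fF (Suc t1) (ue k i t1 t2)) i = 0"
    using case_odd(5,6)[OF a] case_even(5,6)[OF a] by (cases "odd i", auto)+
  show "lmul (Dm \<alpha> (Suc t1)) (Q0 t1) (psi t2 (Suc t1) (fF (Suc t2) (psi (2*k) (Suc t2) i))) i = 0"
    unfolding e using lmul_Dm_two[of "ue k i t1 t2" "Suc t1" \<alpha> "Q0 t1" i] s3 Q by simp
qed

lemma delta_shift: "1 \<le> (k::nat) \<Longrightarrow> t2 < 2*k \<Longrightarrow> (\<Sum>t1<t2. if t2 = t1 + k then F t1 else (0::complex)) = (if k \<le> t2 then F (t2 - k) else 0)"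
proof -
  assume k: "1 \<le> k" and t2: "t2 < 2*k"
  show ?thesis
  proof (cases "k \<le> t2")
    case True
    have "(\<Sum>t1<t2. if t2 = t1 + k then F t1 else 0) = (\<Sum>t1<t2. if t1 = t2 - k then F t1 else 0)"
    proof (rule sum.cong[OF refl])
      fix t1 have "(t2 = t1 + k) = (t1 = t2 - k)" using True by arith
      then show "(if t2 = t1 + k then F t1 else 0) = (if t1 = t2 - k then F t1 else 0)" by simp
    qed
    also have "\<dots> = F (t2 - k)" using True k by (simp add: sum.delta')
    finally show ?thesis using True by simp
  next
    case False
    then show ?thesis by (intro trans[OF sum.neutral]) auto
  qed
qed

lemma shift_sum: "(\<Sum>t2<2*(k::nat). if k \<le> t2 then h (t2 - k) else (0::complex)) = (\<Sum>t1<k. h t1)"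
proof -
  let ?f = "\<lambda>t2. if k \<le> t2 then h (t2 - k) else (0::complex)"
  have e: "{..<2*k} = {..<k} \<union> {k..<k+k}" by auto
  have "sum ?f {..<2*k} = sum ?f {..<k} + sum ?f {k..<k+k}"
    unfolding e by (rule sum.union_disjoint) auto
  also have "sum ?f {..<k} = 0" by (rule sum.neutral) auto
  also have "sum ?f {k..<k+k} = (\<Sum>t2\<in>{0+k..<k+k}. h (t2 - k))" by (rule sum.cong) auto
  also have "\<dots> = (\<Sum>t1\<in>{0..<k}. h t1)" by (subst sum.shift_bounds_nat_ivl) simp
  finally show ?thesis by (simp add: atLeast0LessThan)
qed

declare sum.cl_ivl_Suc[simp del]

lemma stay_val: "2 \<le> x \<Longrightarrow> Dm \<alpha> s x x = (if odd (x+s) then \<alpha> (x-1) else - cnj (\<alpha> (x-2)))"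
  using Dm_entry[of x s \<alpha> x] by (simp add: sw_def bw_def)

lemma Q2_diag:
  assumes k: "1 \<le> k" and i: "2*k+3 \<le> i"
  shows "Q2 \<alpha> (2*k) i i = qv \<alpha> k i"
proof -
  define h where "h t1 = Dm \<alpha> (Suc (t1+k)) (psi (2*k) (Suc (t1+k)) i) (psi (2*k) (Suc (t1+k)) i)
       * Dm \<alpha> (Suc t1) (us k i t1 (t1+k)) (us k i t1 (t1+k))" for t1
  have step: "lmul (Dm \<alpha> (Suc t2)) (Q1 \<alpha> t2) (psi (2*k) (Suc t2) i) i = (if k \<le> t2 then h (t2 - k) else 0)"
    if t2: "t2 < 2*k" for t2
  proof -
    have u3: "3 \<le> psi (2*k) (Suc t2) i" by (rule uu_ge[OF k i t2])
    have "lmul (Dm \<alpha> (Suc t2)) (Q1 \<alpha> t2) (psi (2*k) (Suc t2) i) i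
       = Dm \<alpha> (Suc t2) (psi (2*k) (Suc t2) i) (psi (2*k) (Suc t2) i) * Q1 \<alpha> t2 (psi (2*k) (Suc t2) i) i"
      using lmul_Dm_two[of "psi (2*k) (Suc t2) i" "Suc t2" \<alpha> "Q1 \<alpha> t2" i] u3 Q1_switch[OF k i t2] by simp
    also have "\<dots> = Dm \<alpha> (Suc t2) (psi (2*k) (Suc t2) i) (psi (2*k) (Suc t2) i) *
        (if k \<le> t2 then Dm \<alpha> (Suc (t2-k)) (us k i (t2-k) t2) (us k i (t2-k) t2) else 0)"
      unfolding Q1_stay[OF k i t2] by (subst delta_shift[OF k t2]) simp
    also have "\<dots> = (if k \<le> t2 then h (t2 - k) else 0)" unfolding h_def by auto
    finally show ?thesis .
  qed
  have "Q2 \<alpha> (2*k) i i = (\<Sum>t2<2*k. if k \<le> t2 then h (t2 - k) else 0)"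
    unfolding Q2_formula by (rule sum.cong) (auto simp: step)
  also have "\<dots> = (\<Sum>t1<k. h t1)" by (rule shift_sum)
  also have "\<dots> = qv \<alpha> k i"
    unfolding qv_def sum_negf[symmetric]
  proof (rule sum.cong[OF refl])
    fix t1 assume "t1 \<in> {..<k}"
    then have t1: "t1 < k" by simp
    have a: "t1 < t1 + k" "t1 + k < 2*k" using t1 k by auto
    show "h t1 = - (if odd i then gi \<alpha> k (int i - int t1 - 2) else gi \<alpha> k (int i + int t1 - int k - 1))"
    proof (cases "odd i")
      case True
      have u: "psi (2*k) (Suc (t1+k)) i = i + k - t1 - 1"
        using case_odd(1)[OF k i a True] uu_def[OF k i a] by simp
      have s: "us k i t1 (t1+k) = i - t1" using case_odd(2)[OF k i a True] by simp
      have g: "gi \<alpha> k (int i - int t1 - 2) = cnj (\<alpha> (i - t1 - 2)) * \<alpha> (i + k - t1 - 2)"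
        unfolding gi_def using i t1 by (auto simp: nat_diff_distrib)
      show ?thesis unfolding h_def u s g using True i t1
        by (simp add: stay_val)
    next
      case False
      have u: "psi (2*k) (Suc (t1+k)) i = i + t1 + 1 - k"
        using case_even(1)[OF k i a False] uu_def[OF k i a] by simp
      have s: "us k i t1 (t1+k) = i + t1" using case_even(2)[OF k i a False] by simp
      have n: "int i + int t1 - int k - 1 = int (i + t1 - k - 1)" using i t1 by auto
      have g: "gi \<alpha> k (int i + int t1 - int k - 1) = cnj (\<alpha> (i + t1 - k - 1)) * \<alpha> (i + t1 - 1)"
        unfolding gi_def n using i t1 by (simp del: of_nat_diff)
      show ?thesis unfolding h_def u s g using False i t1
        by (simp add: stay_val)
    qed
  qed
  finally show ?thesis .
qed

declare sum.cl_ivl_Suc[simp del]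

lemma shift_count:
  fixes G :: "int \<Rightarrow> complex"
  assumes G0: "\<And>j. j < 0 \<Longrightarrow> G j = 0" and GN: "\<And>j. int Nj \<le> j \<Longrightarrow> G j = 0" and T: "Nj + c \<le> Ti"
  shows "(\<Sum>i<Ti. if P i then G (int i - int c) else 0) = (\<Sum>j<Nj. if P (j + c) then G (int j) else 0)"
proof -
  let ?f = "\<lambda>i. if P i then G (int i - int c) else 0"
  have e: "{..<Ti} = {..<c} \<union> {c..<Ti}" using T by auto
  have "sum ?f {..<Ti} = sum ?f {..<c} + sum ?f {c..<Ti}" unfolding e by (rule sum.union_disjoint) auto
  also have "sum ?f {..<c} = 0" by (rule sum.neutral) (auto simp: G0)
  also have "sum ?f {c..<Ti} = sum ?f {0+c..<(Ti-c)+c}" using T by simp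
  also have "\<dots> = (\<Sum>j\<in>{0..<Ti-c}. ?f (j + c))" by (rule sum.shift_bounds_nat_ivl)
  also have "\<dots> = (\<Sum>j<Nj. if P (j + c) then G (int j) else 0)"
  proof -
    have "(\<Sum>j\<in>{0..<Ti-c}. ?f (j + c)) = (\<Sum>j\<in>{0..<Ti-c}. if P (j + c) then G (int j) else 0)"
      by (intro sum.cong refl) auto
    also have "\<dots> = (\<Sum>j\<in>{..<Nj}. if P (j + c) then G (int j) else 0)"
      by (rule sum.mono_neutral_right) (use T GN in auto)
    finally show ?thesis .
  qed
  finally show ?thesis by simp
qed

lemma count_k: "(\<Sum>t<k. (if odd (j+t) then x else 0) + (if even (j + k + 1 - t) then x else (0::complex))) = of_nat k * x"
proof -
  have "(\<Sum>t<k. (if even (j + k + 1 - t) then x else 0)) = (\<Sum>t<k. (if even (j + k + 1 - (k - Suc t)) then x else 0))"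
    by (rule sum.nat_diff_reindex[symmetric])
  also have "\<dots> = (\<Sum>t<k. (if even (j + t) then x else 0))"
  proof (rule sum.cong[OF refl])
    fix t assume "t \<in> {..<k}"
    then have "j + k + 1 - (k - Suc t) = j + t + 2" by auto
    then show "(if even (j + k + 1 - (k - Suc t)) then x else 0) = (if even (j + t) then x else 0)" by simp
  qed
  finally have "(\<Sum>t<k. (if odd (j+t) then x else 0) + (if even (j + k + 1 - t) then x else (0::complex)))
      = (\<Sum>t<k. (if odd (j+t) then x else 0) + (if even (j + t) then x else 0))"
    by (simp add: sum.distrib)
  also have "\<dots> = (\<Sum>t<k. x)" by (rule sum.cong) auto
  finally show ?thesis by simp
qed

lemma qv_sum:
  assumes N: "\<And>j. Nj \<le> j \<Longrightarrow> \<alpha> j = 0" and T: "Nj + k + 2 \<le> Ti"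
  shows "(\<Sum>i<Ti. qv \<alpha> k i) = - of_nat k * (\<Sum>j<Nj. gi \<alpha> k (int j))"
proof -
  have G0: "\<And>j. j < 0 \<Longrightarrow> gi \<alpha> k j = 0" unfolding gi_def by simp
  have GN: "\<And>j. int Nj \<le> j \<Longrightarrow> gi \<alpha> k j = 0" unfolding gi_def using N by (simp add: nat_le_iff)
  have A: "(\<Sum>i<Ti. if odd i then gi \<alpha> k (int i - int t - 2) else 0) = (\<Sum>j<Nj. if odd (j + t) then gi \<alpha> k (int j) else 0)" if t: "t < k" for t
  proof -
    have "(\<Sum>i<Ti. if odd i then gi \<alpha> k (int i - int t - 2) else 0) = (\<Sum>i<Ti. if odd i then gi \<alpha> k (int i - int (t+2)) else 0)"
      by (intro sum.cong refl) (simp add: algebra_simps)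
    also have "\<dots> = (\<Sum>j<Nj. if odd (j + (t+2)) then gi \<alpha> k (int j) else 0)" by (rule shift_count[OF G0 GN]) (use T t in auto)
    also have "\<dots> = (\<Sum>j<Nj. if odd (j + t) then gi \<alpha> k (int j) else 0)" by (intro sum.cong refl) simp
    finally show ?thesis .
  qed
  have B: "(\<Sum>i<Ti. if \<not> odd i then gi \<alpha> k (int i + int t - int k - 1) else 0) = (\<Sum>j<Nj. if even (j + k + 1 - t) then gi \<alpha> k (int j) else 0)" if t: "t < k" for t
  proof -
    have "(\<Sum>i<Ti. if \<not> odd i then gi \<alpha> k (int i + int t - int k - 1) else 0) = (\<Sum>i<Ti. if \<not> odd i then gi \<alpha> k (int i - int (k + 1 - t)) else 0)"
      using t by (intro sum.cong) (auto simp: of_nat_diff algebra_simps)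
    also have "\<dots> = (\<Sum>j<Nj. if \<not> odd (j + (k + 1 - t)) then gi \<alpha> k (int j) else 0)" by (rule shift_count[OF G0 GN]) (use T t in auto)
    also have "\<dots> = (\<Sum>j<Nj. if even (j + k + 1 - t) then gi \<alpha> k (int j) else 0)"
    proof (intro sum.cong refl)
      fix j have "j + (k + 1 - t) = j + k + 1 - t" using t by arith
      then show "(if \<not> odd (j + (k + 1 - t)) then gi \<alpha> k (int j) else 0) = (if even (j + k + 1 - t) then gi \<alpha> k (int j) else 0)" by simp
    qed
    finally show ?thesis .
  qed
  have "(\<Sum>i<Ti. qv \<alpha> k i) = - (\<Sum>t<k. \<Sum>i<Ti. (if odd i then gi \<alpha> k (int i - int t - 2) else 0) + (if \<not> odd i then gi \<alpha> k (int i + int t - int k - 1) else 0))"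
    unfolding qv_def sum_negf by (subst sum.swap) (auto intro!: sum.cong)
  also have "\<dots> = - (\<Sum>t<k. \<Sum>j<Nj. (if odd (j + t) then gi \<alpha> k (int j) else 0) + (if even (j + k + 1 - t) then gi \<alpha> k (int j) else 0))"
  proof -
    have "(\<Sum>i<Ti. (if odd i then gi \<alpha> k (int i - int t - 2) else 0) + (if \<not> odd i then gi \<alpha> k (int i + int t - int k - 1) else 0))
      = (\<Sum>j<Nj. (if odd (j + t) then gi \<alpha> k (int j) else 0) + (if even (j + k + 1 - t) then gi \<alpha> k (int j) else 0))" if "t < k" for t
      unfolding sum.distrib A[OF that] B[OF that] by (simp only: sum.distrib)
    then show ?thesis by (auto intro!: sum.cong)
  qed
  also have "\<dots> = - (\<Sum>j<Nj. of_nat k * gi \<alpha> k (int j))"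
    by (subst sum.swap, rule arg_cong[where f=uminus], rule sum.cong[OF refl], rule count_k)
  finally show ?thesis by (simp add: sum_distrib_left sum_negf)
qed

declare sum.cl_ivl_Suc[simp del]

lemma supp_sum:
  fixes f :: "nat \<Rightarrow> real"
  assumes "\<And>z. M \<le> z \<Longrightarrow> f z = 0" "\<And>z. 0 \<le> f z" "inj \<phi>" "finite A"
  shows "(\<Sum>l\<in>A. f (\<phi> l)) \<le> (\<Sum>z<M. f z)"
proof -
  have "(\<Sum>l\<in>A. f (\<phi> l)) = (\<Sum>l\<in>{l\<in>A. \<phi> l < M}. f (\<phi> l))"
    by (rule sum.mono_neutral_right) (use assms in \<open>auto simp: not_less[symmetric]\<close>)
  also have "\<dots> \<le> (\<Sum>z<M. f z)" by (rule inj_sum) (use assms in auto)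
  finally show ?thesis .
qed

lemma HB_proof:
  assumes N: "\<And>j. Nj \<le> j \<Longrightarrow> \<alpha> j = 0" "inj \<phi>" "finite A"
  shows "(\<Sum>l\<in>A. (beta \<alpha> (\<phi> l))^3) \<le> 20 * (\<Sum>j<Nj+2. (cmod (\<alpha> j))^3)"
proof -
  let ?S = "(\<Sum>j<Nj+2. (cmod (\<alpha> j))^3)"
  have "(\<Sum>l\<in>A. (beta \<alpha> (\<phi> l))^3) \<le> (\<Sum>z<Nj+2. (beta \<alpha> z)^3)"
    by (rule supp_sum) (use N in \<open>auto simp: beta_def\<close>)
  also have "\<dots> \<le> (\<Sum>z<Nj+2. 4 * ((cmod (\<alpha> (z-1)))^3 + (cmod (\<alpha> (z-2)))^3))"
    unfolding beta_def by (rule sum_mono) (rule cube_sum, auto)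
  also have "\<dots> = 4 * ((\<Sum>z<Nj+2. (cmod (\<alpha> (z-1)))^3) + (\<Sum>z<Nj+2. (cmod (\<alpha> (z-2)))^3))"
    by (simp add: sum.distrib sum_distrib_left)
  also have "(\<Sum>z<Nj+2. (cmod (\<alpha> (z-1)))^3) \<le> 2 * ?S"
  proof -
    have "(\<Sum>z<Nj+2. (cmod (\<alpha> (z-1)))^3) = (cmod (\<alpha> 0))^3 + (\<Sum>z<Nj+1. (cmod (\<alpha> z))^3)"
      using sum.lessThan_Suc_shift[of "\<lambda>z. (cmod (\<alpha> (z-1)))^3" "Nj+1"] by simp
    also have "\<dots> \<le> ?S + ?S"
    proof (rule add_mono)
      show "(cmod (\<alpha> 0))^3 \<le> ?S" by (rule member_le_sum) auto
      show "(\<Sum>z<Nj+1. (cmod (\<alpha> z))^3) \<le> ?S" by (rule sum_lt_mono) auto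
    qed
    finally show ?thesis by simp
  qed
  also have "(\<Sum>z<Nj+2. (cmod (\<alpha> (z-2)))^3) \<le> 3 * ?S"
  proof -
    have "(\<Sum>z<Nj+2. (cmod (\<alpha> (z-2)))^3) = (cmod (\<alpha> 0))^3 + (cmod (\<alpha> 0))^3 + (\<Sum>z<Nj. (cmod (\<alpha> z))^3)"
      using sum.lessThan_Suc_shift[of "\<lambda>z. (cmod (\<alpha> (z-2)))^3" "Nj+1"]
            sum.lessThan_Suc_shift[of "\<lambda>z. (cmod (\<alpha> (Suc z-2)))^3" "Nj"] by simp
    also have "\<dots> \<le> ?S + ?S + ?S"
    proof (intro add_mono)
      show "(cmod (\<alpha> 0))^3 \<le> ?S" by (rule member_le_sum) auto
      then show "(cmod (\<alpha> 0))^3 \<le> ?S" .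
      show "(\<Sum>z<Nj. (cmod (\<alpha> z))^3) \<le> ?S" by (rule sum_lt_mono) auto
    qed
    finally show ?thesis by simp
  qed
  finally show ?thesis by simp
qed

lemma Gm_free:
  assumes N: "\<And>j. Nj \<le> j \<Longrightarrow> \<alpha> j = 0" and x: "Nj + 2 \<le> x"
  shows "Gm \<alpha> s x l = Gm (\<lambda>_. 0) s x l"
proof -
  have b: "bw \<alpha> s x = 0" unfolding bw_def using N x by auto
  have x1: "1 \<le> x" "\<not> (x = 1 \<and> odd s)" using x by auto
  have b0: "bw (\<lambda>_. 0) s x = 0" by (simp add: bw_def)
  show ?thesis using Gm_entry[OF x1, of \<alpha> l] Gm_entry[OF x1, of "\<lambda>_. 0" l] b b0 by simp
qed

lemma Em_free:
  assumes N: "\<And>j. Nj \<le> j \<Longrightarrow> \<alpha> j = 0"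
  shows "Nj + 2 + s \<le> x \<Longrightarrow> Em \<alpha> s x y = (if y = psi s 0 x then 1 else 0)"
proof (induction s arbitrary: x)
  case 0 then show ?case by (auto simp: mat_id_def)
next
  case (Suc s)
  have "Em \<alpha> (Suc s) x y = lmul (Gm \<alpha> (Suc s)) (Em \<alpha> s) x y" by simp
  also have "\<dots> = lmul (Am (Suc s)) (Em \<alpha> s) x y"
  proof -
    have "\<And>l. Gm \<alpha> (Suc s) x l = Am (Suc s) x l" using Gm_free[of Nj \<alpha> x "Suc s"] N Suc.prems by simp
    then show ?thesis unfolding lmul_def by simp
  qed
  also have "\<dots> = Em \<alpha> s (fF (Suc s) x) y" using Suc.prems by (simp add: lmul_Am)
  also have "\<dots> = (if y = psi s 0 (fF (Suc s) x) then 1 else 0)"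
  proof (rule Suc.IH)
    show "Nj + 2 + s \<le> fF (Suc s) x" using Suc.prems unfolding fF_def by auto
  qed
  also have "psi s 0 (fF (Suc s) x) = psi (Suc s) 0 x" by simp
  finally show ?case .
qed

lemma Em_row0: "Em \<alpha> (Suc s) 0 y = 0"
  by (simp add: lmul_def Gm_zero)

lemma trace_finite:
  assumes N: "\<And>j. Nj \<le> j \<Longrightarrow> \<alpha> j = 0" and k: "1 \<le> k"
  shows "mat_trace (mat_pow (cmv \<alpha>) k) = (\<Sum>i<Nj+2*k+3. Em \<alpha> (2*k) i i)"
proof -
  let ?T = "Nj+2*k+3"
  have z: "Em \<alpha> (2*k) i i = 0" if "?T \<le> i" for i
  proof -
    have "psi (2*k) 0 i = (if odd (i + 2*k) then i + 2*k else i - 2*k)"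
      using psi_bulk[of 0 "2*k" i] that by simp
    then have "psi (2*k) 0 i \<noteq> i" using k that by auto
    then show ?thesis using Em_free[of Nj \<alpha> "2*k" i i] N that by simp
  qed
  have z0: "Em \<alpha> (2*k) 0 0 = 0" using k Em_row0[of \<alpha> "2*k-1" 0] by (cases "2*k") auto
  have "mat_trace (mat_pow (cmv \<alpha>) k) = (\<Sum>\<^sub>\<infinity> i\<in>{1..}. Em \<alpha> (2*k) i i)"
    unfolding mat_trace_def mat_pow_Em ..
  also have "\<dots> = (\<Sum>\<^sub>\<infinity> i\<in>{..<?T}. Em \<alpha> (2*k) i i)"
    by (rule infsum_cong_neutral) (use z z0 in \<open>auto simp: not_le less_Suc0\<close>)
  also have "\<dots> = (\<Sum>i<?T. Em \<alpha> (2*k) i i)" by simp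
  finally show ?thesis .
qed

declare sum.cl_ivl_Suc[simp del]

lemma infsum_m1:
  fixes F :: "int \<Rightarrow> 'a::{comm_monoid_add,t2_space}"
  assumes "\<And>j. int M \<le> j \<Longrightarrow> F j = 0"
  shows "(\<Sum>\<^sub>\<infinity> j\<in>{-1::int..}. F j) = F (-1) + (\<Sum>j<M. F (int j))"
proof -
  have "(\<Sum>\<^sub>\<infinity> j\<in>{-1::int..}. F j) = (\<Sum>\<^sub>\<infinity> j\<in>{-1..<int M}. F j)"
    by (rule infsum_cong_neutral) (use assms in auto)
  also have "\<dots> = (\<Sum>j\<in>{-1..<int M}. F j)" by simp
  also have "{-1..<int M} = insert (-1) (int ` {..<M})"
  proof -
    have memb: "j \<in> int ` {..<M}" if "0 \<le> j" "j < int M" for j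
      using that by (metis imageI lessThan_iff nat_less_iff nonneg_int_cases of_nat_less_iff)
    show ?thesis
    proof (rule set_eqI)
      fix j :: int
      show "j \<in> {-1..<int M} \<longleftrightarrow> j \<in> insert (-1) (int ` {..<M})"
      proof
        assume "j \<in> {-1..<int M}"
        then have "j = -1 \<or> (0 \<le> j \<and> j < int M)" by auto
        then show "j \<in> insert (-1) (int ` {..<M})" using memb by blast
      next
        assume "j \<in> insert (-1) (int ` {..<M})"
        then show "j \<in> {-1..<int M}" by auto
      qed
    qed
  qed
  also have "(\<Sum>j\<in>insert (-1) (int ` {..<M}). F j) = F (-1) + (\<Sum>j\<in>int ` {..<M}. F j)"
    by (rule sum.insert) auto
  also have "(\<Sum>j\<in>int ` {..<M}. F j) = (\<Sum>j<M. F (int j))" by (rule sum.reindex_cong[of int]) auto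
  finally show ?thesis .
qed

lemma ae_nat: "alpha_ext \<alpha> (int j) = \<alpha> j"
  unfolding alpha_ext_def by simp

lemma ae_le1: "\<forall>j. cmod (\<alpha> j) < 1 \<Longrightarrow> cmod (alpha_ext \<alpha> j) \<le> 1"
  unfolding alpha_ext_def by (auto intro: less_imp_le)

lemma rhs_sum:
  assumes N: "\<And>j. Nj \<le> j \<Longrightarrow> \<alpha> j = 0"
  shows "(\<Sum>\<^sub>\<infinity> j\<in>{-1::int..}. cmod (alpha_ext \<alpha> j) ^ 3) = 1 + (\<Sum>j<Nj+2. (cmod (\<alpha> j))^3)"
proof -
  have "(\<Sum>\<^sub>\<infinity> j\<in>{-1::int..}. cmod (alpha_ext \<alpha> j) ^ 3) = cmod (alpha_ext \<alpha> (-1)) ^ 3 + (\<Sum>j<Nj+2. cmod (alpha_ext \<alpha> (int j)) ^ 3)"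
  proof (rule infsum_m1)
    fix j :: int assume "int (Nj+2) \<le> j"
    then show "cmod (alpha_ext \<alpha> j) ^ 3 = 0" using N[of "nat j"] unfolding alpha_ext_def by auto
  qed
  then show ?thesis by (simp add: ae_nat alpha_ext_def)
qed

lemma one_minus_prod:
  fixes x :: "'i \<Rightarrow> real"
  assumes "finite I" "\<And>i. i \<in> I \<Longrightarrow> 0 \<le> x i \<and> x i \<le> 1"
  shows "\<bar>1 - prod x I\<bar> \<le> (\<Sum>i\<in>I. 1 - x i)"
  using assms
proof (induction I rule: finite_induct)
  case empty then show ?case by simp
next
  case (insert a I)
  have p: "0 \<le> prod x I" "prod x I \<le> 1" using insert by (auto intro: prod_nonneg prod_le_1)
  have xa: "0 \<le> x a" "x a \<le> 1" using insert by auto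
  have ih: "\<bar>1 - prod x I\<bar> \<le> (\<Sum>i\<in>I. 1 - x i)" using insert by auto
  have "\<bar>1 - x a * prod x I\<bar> = 1 - x a * prod x I" using p xa by (simp add: mult_le_one)
  also have "\<dots> = (1 - x a) + x a * (1 - prod x I)" by (simp add: algebra_simps)
  also have "\<dots> \<le> (1 - x a) + (1 - prod x I)" using p xa by (simp add: mult_left_le_one_le)
  also have "\<dots> \<le> (1 - x a) + (\<Sum>i\<in>I. 1 - x i)" using ih p by auto
  finally show ?case using insert by simp
qed

declare sum.cl_ivl_Suc[simp del]

definition mterm :: "(nat\<Rightarrow>complex) \<Rightarrow> nat \<Rightarrow> int \<Rightarrow> complex" where
  "mterm \<alpha> k j = cnj (alpha_ext \<alpha> j)
       * (\<Prod>i\<in>{1..int k - 1}. complex_of_real ((rho (alpha_ext \<alpha> (j + i)))^2))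
       * alpha_ext \<alpha> (j + int k)"

lemma rho2: "cmod a \<le> 1 \<Longrightarrow> (rho a)^2 = 1 - (cmod a)^2"
  unfolding rho_def by (simp add: abs_square_le_1)

lemma ae_sq_le1: "\<forall>j. cmod (\<alpha> j) < 1 \<Longrightarrow> (cmod (alpha_ext \<alpha> j))^2 \<le> 1"
  using ae_le1 by (simp add: power_le_one)

lemma prod_rho_bound:
  assumes "\<forall>j. cmod (\<alpha> j) < 1"
  shows "0 \<le> (\<Prod>i\<in>I. (rho (alpha_ext \<alpha> (j + i)))^2) \<and> (\<Prod>i\<in>I. (rho (alpha_ext \<alpha> (j + i)))^2) \<le> 1"
proof -
  have "\<And>i. 0 \<le> (rho (alpha_ext \<alpha> (j + i)))^2 \<and> (rho (alpha_ext \<alpha> (j + i)))^2 \<le> 1"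
    using rho2[OF ae_le1[OF assms]] ae_sq_le1[OF assms] by simp
  then show ?thesis by (auto intro: prod_nonneg prod_le_1)
qed

lemma mterm_prod: "(\<Prod>i\<in>I. complex_of_real ((rho (alpha_ext \<alpha> (j + i)))^2)) = of_real (\<Prod>i\<in>I. (rho (alpha_ext \<alpha> (j + i)))^2)"
  by simp

lemma mterm_m1: assumes "\<forall>j. cmod (\<alpha> j) < 1" shows "cmod (mterm \<alpha> k (-1)) \<le> 1"
proof -
  have p: "\<bar>\<Prod>i\<in>{1..int k - 1}. (rho (alpha_ext \<alpha> (-1 + i)))^2\<bar> \<le> 1"
    using prod_rho_bound[OF assms, of "-1" "{1..int k - 1}"] by (subst abs_of_nonneg) auto
  have a: "cmod (alpha_ext \<alpha> (-1 + int k)) \<le> 1" by (rule ae_le1[OF assms])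
  have c: "cmod (cnj (alpha_ext \<alpha> (-1))) = 1" by (simp add: alpha_ext_def)
  have pc: "cmod (\<Prod>i\<in>{1..int k - 1}. complex_of_real ((rho (alpha_ext \<alpha> (-1 + i)))^2)) \<le> 1"
    using p by (simp only: mterm_prod norm_of_real)
  have "cmod (mterm \<alpha> k (-1)) = cmod (\<Prod>i\<in>{1..int k - 1}. complex_of_real ((rho (alpha_ext \<alpha> (-1 + i)))^2)) * cmod (alpha_ext \<alpha> (-1 + int k))"
    unfolding mterm_def norm_mult c by simp
  also have "\<dots> \<le> 1" using pc a by (intro mult_le_one) auto
  finally show ?thesis .
qed

lemma mterm_diff:
  assumes \<alpha>: "\<forall>j. cmod (\<alpha> j) < 1"
  shows "cmod (mterm \<alpha> k (int j) - gi \<alpha> k (int j)) \<le> (\<Sum>i\<in>{1..int k - 1}. (cmod (\<alpha> j))^3 + 2 * (cmod (alpha_ext \<alpha> (int j + i)))^3)"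
proof -
  let ?I = "{1..int k - 1}"
  let ?P = "\<Prod>i\<in>?I. (rho (alpha_ext \<alpha> (int j + i)))^2"
  have e: "mterm \<alpha> k (int j) - gi \<alpha> k (int j) = cnj (\<alpha> j) * \<alpha> (j+k) * (of_real ?P - 1)"
    unfolding mterm_def mterm_prod gi_def by (simp add: ae_nat algebra_simps flip: of_nat_add)
  have a1: "cmod (\<alpha> (j+k)) \<le> 1" using \<alpha> less_imp_le by blast
  have "\<bar>1 - ?P\<bar> \<le> (\<Sum>i\<in>?I. 1 - (rho (alpha_ext \<alpha> (int j + i)))^2)"
    by (rule one_minus_prod) (use rho2[OF ae_le1[OF \<alpha>]] ae_sq_le1[OF \<alpha>] in auto)
  also have "\<dots> = (\<Sum>i\<in>?I. (cmod (alpha_ext \<alpha> (int j + i)))^2)"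
    using rho2[OF ae_le1[OF \<alpha>]] by simp
  finally have pb: "\<bar>1 - ?P\<bar> \<le> (\<Sum>i\<in>?I. (cmod (alpha_ext \<alpha> (int j + i)))^2)" .
  have "cmod (mterm \<alpha> k (int j) - gi \<alpha> k (int j)) = cmod (\<alpha> j) * cmod (\<alpha> (j+k)) * \<bar>?P - 1\<bar>"
  proof -
    have o: "(of_real ?P - 1 :: complex) = of_real (?P - 1)" by simp
    show ?thesis unfolding e norm_mult o norm_of_real by simp
  qed
  also have "\<dots> = cmod (\<alpha> j) * cmod (\<alpha> (j+k)) * \<bar>1 - ?P\<bar>" by (simp add: abs_minus_commute)
  also have "\<dots> \<le> cmod (\<alpha> j) * 1 * \<bar>1 - ?P\<bar>"
    by (intro mult_right_mono mult_left_mono a1) auto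
  also have "\<dots> \<le> cmod (\<alpha> j) * (\<Sum>i\<in>?I. (cmod (alpha_ext \<alpha> (int j + i)))^2)"
    using pb by (simp add: mult_left_mono)
  also have "\<dots> = (\<Sum>i\<in>?I. cmod (\<alpha> j) * cmod (alpha_ext \<alpha> (int j + i)) * cmod (alpha_ext \<alpha> (int j + i)))"
    by (simp add: sum_distrib_left power2_eq_square mult.assoc)
  also have "\<dots> \<le> (\<Sum>i\<in>?I. (cmod (\<alpha> j))^3 + 2 * (cmod (alpha_ext \<alpha> (int j + i)))^3)"
  proof (rule sum_mono)
    fix i
    have "cmod (\<alpha> j) * cmod (alpha_ext \<alpha> (int j + i)) * cmod (alpha_ext \<alpha> (int j + i))
      \<le> (cmod (\<alpha> j))^3 + (cmod (alpha_ext \<alpha> (int j + i)))^3 + (cmod (alpha_ext \<alpha> (int j + i)))^3"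
      by (rule amgm3) auto
    then show "cmod (\<alpha> j) * cmod (alpha_ext \<alpha> (int j + i)) * cmod (alpha_ext \<alpha> (int j + i))
      \<le> (cmod (\<alpha> j))^3 + 2 * (cmod (alpha_ext \<alpha> (int j + i)))^3" by simp
  qed
  finally show ?thesis .
qed

lemma mterm_total:
  assumes \<alpha>: "\<forall>j. cmod (\<alpha> j) < 1" and N: "\<And>j. Nj \<le> j \<Longrightarrow> \<alpha> j = 0"
  shows "(\<Sum>j<Nj. cmod (mterm \<alpha> k (int j) - gi \<alpha> k (int j))) \<le> 3 * real k * (\<Sum>j<Nj+2. (cmod (\<alpha> j))^3)"
proof -
  let ?I = "{1..int k - 1}"
  let ?S = "\<Sum>j<Nj+2. (cmod (\<alpha> j))^3"
  have S0: "0 \<le> ?S" by (simp add: sum_nonneg)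
  have sh: "(\<Sum>j<Nj. (cmod (alpha_ext \<alpha> (int j + i)))^3) \<le> ?S" if "i \<in> ?I" for i
  proof -
    have "(\<Sum>j<Nj. (cmod (alpha_ext \<alpha> (int j + i)))^3) = (\<Sum>j<Nj. (cmod (\<alpha> (j + nat i)))^3)"
      using that by (intro sum.cong refl) (simp add: alpha_ext_def nat_add_distrib)
    also have "\<dots> \<le> ?S" by (rule supp_sum[of "Nj+2" "\<lambda>z. (cmod (\<alpha> z))^3"]) (use N in \<open>auto simp: inj_def\<close>)
    finally show ?thesis .
  qed
  have "(\<Sum>j<Nj. cmod (mterm \<alpha> k (int j) - gi \<alpha> k (int j))) \<le> (\<Sum>j<Nj. \<Sum>i\<in>?I. (cmod (\<alpha> j))^3 + 2 * (cmod (alpha_ext \<alpha> (int j + i)))^3)"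
    by (rule sum_mono) (rule mterm_diff[OF \<alpha>])
  also have "\<dots> = (\<Sum>i\<in>?I. (\<Sum>j<Nj. (cmod (\<alpha> j))^3) + 2 * (\<Sum>j<Nj. (cmod (alpha_ext \<alpha> (int j + i)))^3))"
    by (subst sum.swap) (simp add: sum.distrib sum_distrib_left)
  also have "\<dots> \<le> (\<Sum>i\<in>?I. ?S + 2 * ?S)"
  proof (rule sum_mono)
    fix i assume i: "i \<in> ?I"
    have "(\<Sum>j<Nj. (cmod (\<alpha> j))^3) \<le> ?S" by (rule sum_lt_mono) auto
    then show "(\<Sum>j<Nj. (cmod (\<alpha> j))^3) + 2 * (\<Sum>j<Nj. (cmod (alpha_ext \<alpha> (int j + i)))^3) \<le> ?S + 2 * ?S"
      using sh[OF i] by linarith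
  qed
  also have "\<dots> = real (card ?I) * (3 * ?S)" by simp
  also have "\<dots> \<le> real k * (3 * ?S)" by (intro mult_right_mono) (use S0 in auto)
  finally show ?thesis by (simp only: mult.assoc mult.left_commute)
qed

lemma main_split:
  assumes N: "\<And>j. Nj \<le> j \<Longrightarrow> \<alpha> j = 0"
  shows "(\<Sum>\<^sub>\<infinity> j\<in>{-1::int..}. mterm \<alpha> k j) = mterm \<alpha> k (-1) + (\<Sum>j<Nj. mterm \<alpha> k (int j))"
proof (rule infsum_m1)
  fix j :: int assume "int Nj \<le> j"
  then have "alpha_ext \<alpha> j = 0" using N[of "nat j"] unfolding alpha_ext_def by auto
  then show "mterm \<alpha> k j = 0" unfolding mterm_def by simp
qed

declare sum.cl_ivl_Suc[simp del]

lemma gi_bound: assumes "\<forall>j. cmod (\<alpha> j) < 1" shows "cmod (gi \<alpha> k j) \<le> 1"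
proof -
  have "cmod (\<alpha> a) * cmod (\<alpha> b) \<le> 1" for a b
    using assms by (intro mult_le_one) (auto intro: less_imp_le)
  then show ?thesis unfolding gi_def by (simp add: norm_mult)
qed

lemma qv_bound: assumes "\<forall>j. cmod (\<alpha> j) < 1" shows "cmod (qv \<alpha> k i) \<le> real k"
proof -
  have "cmod (qv \<alpha> k i) \<le> (\<Sum>t<k. cmod (if odd i then gi \<alpha> k (int i - int t - 2) else gi \<alpha> k (int i + int t - int k - 1)))"
    unfolding qv_def norm_minus_cancel by (rule norm_sum)
  also have "\<dots> \<le> (\<Sum>t<k. 1)" by (rule sum_mono) (simp add: gi_bound[OF assms])
  finally show ?thesis by simp
qed

lemma bulk_diff:
  assumes "1 \<le> k" "2*k+3 \<le> i"
  shows "Em \<alpha> (2*k) i i - qv \<alpha> k i = Rr \<alpha> (2*k) i i"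
  using Em_split[of \<alpha> "2*k" i i] Q0_diag[OF assms] Q1_diag[OF assms] Q2_diag[OF assms] by simp

theorem final:
  assumes \<alpha>: "\<forall>j. cmod (\<alpha> j) < 1" and fin: "finite {j. \<alpha> j \<noteq> 0}" and k2: "2 \<le> k"
  shows "cmod (mat_trace (mat_pow (cmv \<alpha>) k) - (- of_nat k * (\<Sum>\<^sub>\<infinity> j\<in>{-1::int..}. mterm \<alpha> k j)))
     \<le> 20000 * real k ^ 3 * (\<Sum>\<^sub>\<infinity> j\<in>{-1::int..}. cmod (alpha_ext \<alpha> j) ^ 3)"
proof -
  obtain Nj where Nj: "{j. \<alpha> j \<noteq> 0} \<subseteq> {..<Nj}" using finite_nat_bounded[OF fin] by blast
  have N: "\<And>j. Nj \<le> j \<Longrightarrow> \<alpha> j = 0" using Nj by force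
  have k1: "1 \<le> k" using k2 by simp
  define S3 where "S3 = (\<Sum>j<Nj+2. (cmod (\<alpha> j))^3)"
  have S30: "0 \<le> S3" unfolding S3_def by (simp add: sum_nonneg)
  define T where "T = Nj + 2*k + 3"
  define B where "B = 2*k + 3"
  define G where "G = (\<Sum>j<Nj. gi \<alpha> k (int j))"
  have tr: "mat_trace (mat_pow (cmv \<alpha>) k) = (\<Sum>i<T. Em \<alpha> (2*k) i i)"
    unfolding T_def by (rule trace_finite[OF N k1])
  have Tc: "Nj + k + 2 \<le> T" unfolding T_def by simp
  have qs: "(\<Sum>i<T. qv \<alpha> k i) = - of_nat k * G" unfolding G_def by (rule qv_sum[OF N Tc])
  have HB: "\<And>(\<phi>::nat\<Rightarrow>nat) (A::nat set). inj \<phi> \<Longrightarrow> finite A \<Longrightarrow> (\<Sum>l\<in>A. (beta \<alpha> (\<phi> l))^3) \<le> 20 * S3"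
    unfolding S3_def by (rule HB_proof[OF N])
  have E1: "cmod (mat_trace (mat_pow (cmv \<alpha>) k) + of_nat k * G) \<le> real B * (1 + real k) + 111 * (real (2*k))^3 * (20 * S3)"
  proof -
    have "mat_trace (mat_pow (cmv \<alpha>) k) + of_nat k * G = (\<Sum>i<T. Em \<alpha> (2*k) i i - qv \<alpha> k i)"
      unfolding tr sum_subtractf qs by simp
    also have "cmod \<dots> \<le> (\<Sum>i<T. cmod (Em \<alpha> (2*k) i i - qv \<alpha> k i))" by (rule norm_sum)
    also have "\<dots> \<le> (\<Sum>i<T. (if i < B then 1 + real k else 0) + cmod (Rr \<alpha> (2*k) i i))"
    proof (rule sum_mono)
      fix i
      show "cmod (Em \<alpha> (2*k) i i - qv \<alpha> k i) \<le> (if i < B then 1 + real k else 0) + cmod (Rr \<alpha> (2*k) i i)"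
      proof (cases "i < B")
        case True
        have "cmod (Em \<alpha> (2*k) i i - qv \<alpha> k i) \<le> cmod (Em \<alpha> (2*k) i i) + cmod (qv \<alpha> k i)" by (rule norm_triangle_ineq4)
        also have "\<dots> \<le> 1 + real k" using Em_bound[OF \<alpha>] qv_bound[OF \<alpha>] by (intro add_mono)
        finally show ?thesis using True by (simp add: add_increasing2)
      next
        case False
        then show ?thesis using bulk_diff[OF k1, of i \<alpha>] by (simp add: B_def)
      qed
    qed
    also have "\<dots> = (\<Sum>i<T. if i < B then 1 + real k else 0) + (\<Sum>i<T. cmod (Rr \<alpha> (2*k) i i))"
      by (rule sum.distrib)
    also have "(\<Sum>i<T. if i < B then 1 + real k else 0) = real B * (1 + real k)"
    proof -
      let ?f = "\<lambda>i. if i < B then 1 + real k else 0"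
      have e: "{..<T} = {..<B} \<union> {B..<T}" by (auto simp: T_def B_def)
      have "sum ?f {..<T} = sum ?f {..<B} + sum ?f {B..<T}" unfolding e by (rule sum.union_disjoint) auto
      also have "sum ?f {B..<T} = 0" by (rule sum.neutral) auto
      also have "sum ?f {..<B} = (\<Sum>i<B. 1 + real k)" by (rule sum.cong) auto
      also have "\<dots> = real B * (1 + real k)" by simp
      finally show ?thesis by simp
    qed
    also have "(\<Sum>i<T. cmod (Rr \<alpha> (2*k) i i)) \<le> 111 * (real (2*k))^3 * (20 * S3)"
      by (rule R_total[OF \<alpha> HB])
    finally show ?thesis by simp
  qed
  have MT: "(\<Sum>\<^sub>\<infinity> j\<in>{-1::int..}. mterm \<alpha> k j) = mterm \<alpha> k (-1) + (\<Sum>j<Nj. mterm \<alpha> k (int j))"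
    by (rule main_split[OF N])
  have E2: "cmod (of_nat k * G - of_nat k * (\<Sum>\<^sub>\<infinity> j\<in>{-1::int..}. mterm \<alpha> k j)) \<le> real k * (1 + 3 * real k * S3)"
  proof -
    have "of_nat k * G - of_nat k * (\<Sum>\<^sub>\<infinity> j\<in>{-1::int..}. mterm \<alpha> k j)
        = - of_nat k * (mterm \<alpha> k (-1) + (\<Sum>j<Nj. mterm \<alpha> k (int j) - gi \<alpha> k (int j)))"
      unfolding MT G_def sum_subtractf by (simp add: algebra_simps)
    also have "cmod \<dots> = real k * cmod (mterm \<alpha> k (-1) + (\<Sum>j<Nj. mterm \<alpha> k (int j) - gi \<alpha> k (int j)))"
      by (simp add: norm_mult)
    also have "\<dots> \<le> real k * (1 + 3 * real k * S3)"
    proof (rule mult_left_mono)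
      have "cmod (mterm \<alpha> k (-1) + (\<Sum>j<Nj. mterm \<alpha> k (int j) - gi \<alpha> k (int j)))
          \<le> cmod (mterm \<alpha> k (-1)) + (\<Sum>j<Nj. cmod (mterm \<alpha> k (int j) - gi \<alpha> k (int j)))"
        by (rule order.trans[OF norm_triangle_ineq add_left_mono[OF norm_sum]])
      also have "\<dots> \<le> 1 + 3 * real k * S3"
        using mterm_m1[OF \<alpha>, of k] mterm_total[of \<alpha> Nj k, OF \<alpha> N] unfolding S3_def by (intro add_mono)
      finally show "cmod (mterm \<alpha> k (-1) + (\<Sum>j<Nj. mterm \<alpha> k (int j) - gi \<alpha> k (int j))) \<le> 1 + 3 * real k * S3" .
    qed simp
    finally show ?thesis .
  qed
  have "cmod (mat_trace (mat_pow (cmv \<alpha>) k) - (- of_nat k * (\<Sum>\<^sub>\<infinity> j\<in>{-1::int..}. mterm \<alpha> k j)))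
     = cmod ((mat_trace (mat_pow (cmv \<alpha>) k) + of_nat k * G) - (of_nat k * G - of_nat k * (\<Sum>\<^sub>\<infinity> j\<in>{-1::int..}. mterm \<alpha> k j)))"
    by (simp add: algebra_simps)
  also have "\<dots> \<le> cmod (mat_trace (mat_pow (cmv \<alpha>) k) + of_nat k * G) + cmod (of_nat k * G - of_nat k * (\<Sum>\<^sub>\<infinity> j\<in>{-1::int..}. mterm \<alpha> k j))"
    by (rule norm_triangle_ineq4)
  also have "\<dots> \<le> (real B * (1 + real k) + 111 * (real (2*k))^3 * (20 * S3)) + real k * (1 + 3 * real k * S3)"
    using E1 E2 by (rule add_mono)
  also have "\<dots> \<le> 20000 * real k ^ 3 * (1 + S3)"
  proof -
    have kr: "1 \<le> real k" using k1 by simp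
    have h1: "real k \<le> real k ^ 2"
    proof -
      have "real k * 1 \<le> real k * real k" using kr by (intro mult_left_mono) auto
      then show ?thesis by (simp add: power2_eq_square)
    qed
    have h2: "real k ^ 2 \<le> real k ^ 3"
    proof -
      have "real k ^ 2 * 1 \<le> real k ^ 2 * real k" using kr by (intro mult_left_mono) auto
      then show ?thesis by (simp add: power2_eq_square power3_eq_cube)
    qed
    have h3: "1 \<le> real k ^ 3" using kr by (simp add: one_le_power)
    note k2r = h1 h2 h3
    have a: "real B * (1 + real k) + real k \<le> 11 * real k ^ 3"
    proof -
      have "real B * (1 + real k) + real k = 2 * real k ^ 2 + 6 * real k + 3"
        by (simp add: B_def algebra_simps power2_eq_square)
      then show ?thesis using h1 h2 h3 by linarith
    qed
    define X where "X = real k ^ 3 * S3"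
    have X0: "0 \<le> X" unfolding X_def using S30 h3 by simp
    have b1: "real k * (3 * real k * S3) \<le> 3 * X"
    proof -
      have "real k * (3 * real k * S3) = 3 * (real k ^ 2 * S3)" by (simp add: power2_eq_square)
      also have "\<dots> \<le> 3 * (real k ^ 3 * S3)" using k2r S30 by (intro mult_left_mono mult_right_mono) auto
      finally show ?thesis unfolding X_def .
    qed
    have b2: "111 * (real (2*k))^3 * (20 * S3) = 17760 * X" unfolding X_def by (simp add: power_mult_distrib)
    have d1: "real k * (1 + 3 * real k * S3) = real k + real k * (3 * real k * S3)" by (simp add: algebra_simps)
    have d2: "20000 * real k ^ 3 * (1 + S3) = 20000 * real k ^ 3 + 20000 * X" unfolding X_def by (simp add: algebra_simps)
    show ?thesis unfolding d1 d2 using a b1 b2 X0 h3 by linarith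
  qed
  also have "\<dots> = 20000 * real k ^ 3 * (\<Sum>\<^sub>\<infinity> j\<in>{-1::int..}. cmod (alpha_ext \<alpha> j) ^ 3)"
  proof -
    have r: "(\<Sum>\<^sub>\<infinity> j\<in>{-1::int..}. cmod (alpha_ext \<alpha> j) ^ 3) = 1 + S3"
      unfolding S3_def by (rule rhs_sum) (rule N)
    show ?thesis by (simp only: r)
  qed
  finally show ?thesis .
qed

theorem lemma3p3:
  "\<exists>K::real. \<forall>(\<alpha>::nat \<Rightarrow> complex) (k::nat).
     (\<forall>j. cmod (\<alpha> j) < 1) \<longrightarrow> finite {j. \<alpha> j \<noteq> 0} \<longrightarrow> 2 \<le> k \<longrightarrow>
     cmod (mat_trace (mat_pow (cmv \<alpha>) k)
           - (- of_nat k * (\<Sum>\<^sub>\<infinity> j\<in>{-1::int..}.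
                 cnj (alpha_ext \<alpha> j)
                 * (\<Prod>i\<in>{1..int k - 1}. complex_of_real ((rho (alpha_ext \<alpha> (j + i)))^2))
                 * alpha_ext \<alpha> (j + int k))))
     \<le> K * real k ^ 3 * (\<Sum>\<^sub>\<infinity> j\<in>{-1::int..}. cmod (alpha_ext \<alpha> j) ^ 3)"
proof (intro exI[of _ "20000"] allI impI)
  fix \<alpha> :: "nat \<Rightarrow> complex" and k :: nat
  assume a: "\<forall>j. cmod (\<alpha> j) < 1" and b: "finite {j. \<alpha> j \<noteq> 0}" and c: "2 \<le> k"
  have e: "(\<lambda>j. cnj (alpha_ext \<alpha> j) * (\<Prod>i\<in>{1..int k - 1}. complex_of_real ((rho (alpha_ext \<alpha> (j + i)))^2))
                 * alpha_ext \<alpha> (j + int k)) = mterm \<alpha> k"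
    by (rule ext) (simp only: mterm_def)
  show "cmod (mat_trace (mat_pow (cmv \<alpha>) k)
           - (- of_nat k * (\<Sum>\<^sub>\<infinity> j\<in>{-1::int..}.
                 cnj (alpha_ext \<alpha> j)
                 * (\<Prod>i\<in>{1..int k - 1}. complex_of_real ((rho (alpha_ext \<alpha> (j + i)))^2))
                 * alpha_ext \<alpha> (j + int k))))
     \<le> 20000 * real k ^ 3 * (\<Sum>\<^sub>\<infinity> j\<in>{-1::int..}. cmod (alpha_ext \<alpha> j) ^ 3)"
    unfolding e by (rule final[OF a b c])
qed

end
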